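(* Under the standing setting of the context, define $\boldsymbol\gamma_\epsilon(\mathbf{x}):=\mathbf{J}[\pi_\epsilon](\mathbf{x})/\pi_\epsilon(\mathbf{x})=\mathbf{b}(\mathbf{x})-\epsilon\mathbf{D}\nabla\ln\pi_\epsilon(\mathbf{x})$. For $\mathbf{x}^*\in\Gamma$ and $\mathbf{x}$ with $\|\mathbf{x}-\mathbf{x}^*\|=O(\sqrt\epsilon)$, $$\boldsymbol\gamma_\epsilon(\mathbf{x})=\mathbf{b}(\mathbf{x}^* )+\big(\mathbf{A}(\mathbf{x}^* )+\mathbf{D}[\boldsymbol\Sigma^*]^{-1}\big)(\mathbf{x}-\mathbf{x}^* )+O(\epsilon),$$ where $[\boldsymbol\Sigma^*]^{-1}=\nabla\nabla\varphi(\mathbf{x}^* )$ and, along the trajectory $\mathbf{x}^*(t)$ of $\dot{\mathbf{x}}=\mathbf{b}(\mathbf{x})$ on $\Gamma$, it satisfies $\frac{\mathrm{d}[\boldsymbol\Sigma^*]^{-1}}{\mathrm{d}t}=-[\boldsymbol\Sigma^*]^{-1}\mathbf{A}(\mathbf{x}^* )-\mathbf{A}(\mathbf{x}^* )^T[\boldsymbol\Sigma^*]^{-1}-2[\boldsymbol\Sigma^*]^{-1}\mathbf{D}[\boldsymbol\Sigma^*]^{-1}$.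
   Context: Standing setting: $\mathrm{d}\mathbf{X}_\epsilon=\mathbf{b}(\mathbf{X}_\epsilon)\mathrm{d}t+[2\epsilon\mathbf{D}]^{1/2}\mathrm{d}\mathbf{B}(t)$ on $\mathbb{R}^n$, $\mathbf{b}$ smooth with Jacobian $\mathbf{A}$, $\mathbf{D}$ constant symmetric positive definite; $\dot{\mathbf{x}}=\mathbf{b}(\mathbf{x})$ has a stable limit cycle $\Gamma$. The stationary density $\pi_\epsilon$ exists with stationary probability flux $\mathbf{J}[\pi_\epsilon]=\mathbf{b}\pi_\epsilon-\epsilon\mathbf{D}\nabla\pi_\epsilon$ (so $\nabla\cdot\mathbf{J}[\pi_\epsilon]=0$), and near $\Gamma$ it has the WKB form $\pi_\epsilon(\mathbf{x})=\hat a(\epsilon)\exp[-\varphi(\mathbf{x})/\epsilon+\ln\omega(\mathbf{x})+O(\epsilon)]$ with smooth $\varphi$ and $\omega>0$, the expansion being differentiable term by term; $\varphi=0$ and $\nabla\varphi=0$ on $\Gamma$. The regularity assumptions of the standing setting (uniform convergence of derivatives of the time-dependent WKB functions, continuity of $\mathbf{b},\mathbf{A}$, nonsingular linearized covariance equal to the inverse Hessian of the time-dependent rate function) hold. *)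

theory Defs
  imports "HOL-Analysis.Analysis"
begin

definition grad :: "(real^'n \<Rightarrow> real) \<Rightarrow> real^'n \<Rightarrow> real^'n" where
  "grad f x = (\<chi> i. frechet_derivative f (at x) (axis i 1))"

definition jac :: "(real^'n \<Rightarrow> real^'m) \<Rightarrow> real^'n \<Rightarrow> real^'n^'m" where
  "jac F x = (\<chi> i j. frechet_derivative F (at x) (axis j 1) $ i)"

definition hess :: "(real^'n \<Rightarrow> real) \<Rightarrow> real^'n \<Rightarrow> real^'n^'n" where
  "hess f x = jac (grad f) x"

definition divg :: "(real^'n \<Rightarrow> real^'n) \<Rightarrow> real^'n \<Rightarrow> real" where
  "divg F x = (\<Sum>i\<in>UNIV. frechet_derivative F (at x) (axis i 1) $ i)"

fun Ck_on :: "nat \<Rightarrow> (real^'n) set \<Rightarrow> (real^'n \<Rightarrow> real) \<Rightarrow> bool" where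
  "Ck_on 0 S f = continuous_on S f"
| "Ck_on (Suc k) S f = ((\<forall>x\<in>S. f differentiable (at x)) \<and>
      (\<forall>i. Ck_on k S (\<lambda>x. frechet_derivative f (at x) (axis i 1))))"

definition smooth_on :: "(real^'n) set \<Rightarrow> (real^'n \<Rightarrow> real) \<Rightarrow> bool" where
  "smooth_on S f = (\<forall>k. Ck_on k S f)"

definition smooth_vec_on :: "(real^'n) set \<Rightarrow> (real^'n \<Rightarrow> real^'m) \<Rightarrow> bool" where
  "smooth_vec_on S F = (\<forall>i. smooth_on S (\<lambda>x. F x $ i))"

definition forward_solution :: "(real^'n \<Rightarrow> real^'n) \<Rightarrow> (real \<Rightarrow> real^'n) \<Rightarrow> bool" where
  "forward_solution b x = (\<forall>t\<ge>0. (x has_vector_derivative b (x t)) (at t within {0..}))"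

definition stable_limit_cycle :: "(real^'n \<Rightarrow> real^'n) \<Rightarrow> (real^'n) set \<Rightarrow> bool" where
  "stable_limit_cycle b \<Gamma> =
    ((\<exists>p T. T > 0 \<and> (\<forall>t. (p has_vector_derivative b (p t)) (at t)) \<and>
        (\<forall>t. p (t + T) = p t) \<and> b (p 0) \<noteq> 0 \<and> \<Gamma> = p ` {0..T}) \<and>
     (\<forall>e>0. \<exists>d>0. \<forall>x. forward_solution b x \<and> infdist (x 0) \<Gamma> < d \<longrightarrow>
        (\<forall>t\<ge>0. infdist (x t) \<Gamma> < e)) \<and>
     (\<exists>d>0. \<forall>x. forward_solution b x \<and> infdist (x 0) \<Gamma> < d \<longrightarrow>
        ((\<lambda>t. infdist (x t) \<Gamma>) \<longlongrightarrow> 0) at_top))"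

definition flux :: "(real^'n \<Rightarrow> real^'n) \<Rightarrow> real^'n^'n \<Rightarrow> real \<Rightarrow> (real^'n \<Rightarrow> real) \<Rightarrow> real^'n \<Rightarrow> real^'n" where
  "flux b D \<epsilon> p x = p x *\<^sub>R b x - \<epsilon> *\<^sub>R (D *v grad p x)"

text \<open>gamma_eps = J[pi]/pi = b - eps D grad ln pi.\<close>
definition gammaf :: "(real^'n \<Rightarrow> real^'n) \<Rightarrow> real^'n^'n \<Rightarrow> real \<Rightarrow> (real^'n \<Rightarrow> real) \<Rightarrow> real^'n \<Rightarrow> real^'n" where
  "gammaf b D \<epsilon> p x = b x - \<epsilon> *\<^sub>R (D *v grad (\<lambda>y. ln (p y)) x)"

end

theory Submission
  imports Defs
begin


lemma bl_vec_lambda: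
  fixes F' :: "'m::finite \<Rightarrow> 'a::real_normed_vector \<Rightarrow> 'b::real_normed_vector"
  assumes "\<And>i. bounded_linear (F' i)"
  shows "bounded_linear (\<lambda>h. \<chi> i. F' i h)"
proof -
  have lin: "linear (\<lambda>h. \<chi> i. F' i h)"
  proof -
    have l: "\<And>i. linear (F' i)" using assms bounded_linear.linear by blast
    show ?thesis unfolding linear_iff by (auto simp: vec_eq_iff linear_add[OF l] linear_scale[OF l])
  qed
  obtain K where K: "\<And>i h. norm (F' i h) \<le> norm h * K i"
  proof -
    have "\<forall>i. \<exists>K. \<forall>h. norm (F' i h) \<le> norm h * K"
      using assms bounded_linear.bounded by blast
    then show ?thesis using that by metis
  qed
  show ?thesis
  proof (rule bounded_linear_intro[where K="\<Sum>i\<in>UNIV. \<bar>K i\<bar>"])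
    show "\<And>x y. (\<chi> i. F' i (x + y)) = (\<chi> i. F' i x) + (\<chi> i. F' i y)"
      using lin by (simp add: linear_iff)
    show "\<And>r x. (\<chi> i. F' i (r *\<^sub>R x)) = r *\<^sub>R (\<chi> i. F' i x)"
      using lin by (simp add: linear_iff)
    fix h
    have "norm (\<chi> i. F' i h) \<le> (\<Sum>i\<in>UNIV. norm ((\<chi> i. F' i h) $ i))"
      unfolding norm_vec_def by (rule L2_set_le_sum) simp
    also have "\<dots> \<le> (\<Sum>i\<in>UNIV. norm h * \<bar>K i\<bar>)"
      apply (rule sum_mono) using K by (simp add: order_trans[OF K] mult_left_mono)
    finally show "norm (\<chi> i. F' i h) \<le> norm h * (\<Sum>i\<in>UNIV. \<bar>K i\<bar>)"
      by (simp add: sum_distrib_left)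
  qed
qed

lemma vec_has_derivative:
  fixes F :: "'a::real_normed_vector \<Rightarrow> 'b::real_normed_vector ^ 'm::finite"
  assumes "\<And>i. ((\<lambda>x. F x $ i) has_derivative F' i) net"
  shows "(F has_derivative (\<lambda>h. \<chi> i. F' i h)) net"
proof -
  have bl: "\<And>i. bounded_linear (F' i)" using assms has_derivative_bounded_linear by blast
  show ?thesis
    unfolding has_derivative_def
    apply (rule conjI)
     apply (rule bl_vec_lambda[OF bl])
    apply (rule vec_tendstoI)
    using assms unfolding has_derivative_def by simp
qed

lemma vec_has_derivative_nth:
  fixes F :: "'a::real_normed_vector \<Rightarrow> 'b::real_normed_vector ^ 'm::finite"
  assumes "(F has_derivative F') net"
  shows "((\<lambda>x. F x $ i) has_derivative (\<lambda>h. F' h $ i)) net"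
  using bounded_linear.has_derivative[OF bounded_linear_vec_nth assms] by simp



definition pd :: "'n \<Rightarrow> (real^'n \<Rightarrow> real) \<Rightarrow> real^'n \<Rightarrow> real" where
  "pd i f x = frechet_derivative f (at x) (axis i 1)"

lemma lin_scalar_expand:
  fixes L :: "real^'n \<Rightarrow> real"
  assumes "linear L"
  shows "L h = (\<Sum>i\<in>UNIV. h $ i * L (axis i 1))"
proof -
  have "L h = L (\<Sum>i\<in>UNIV. h $ i *\<^sub>R axis i 1)"
    using basis_expansion[of h] by (simp add: scalar_mult_eq_scaleR)
  also have "\<dots> = (\<Sum>i\<in>UNIV. h $ i * L (axis i 1))"
    by (simp add: linear_sum[OF assms] linear_scale[OF assms])
  finally show ?thesis .
qed

lemma grad_eq: "grad f x = (\<chi> i. pd i f x)"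
  by (simp add: grad_def pd_def)

lemma grad_nth[simp]: "grad f x $ i = pd i f x"
  by (simp add: grad_def pd_def)

lemma grad_works:
  fixes f :: "real^'n \<Rightarrow> real"
  assumes "f differentiable (at x)"
  shows "(f has_derivative (\<lambda>h. grad f x \<bullet> h)) (at x)"
proof -
  have d: "(f has_derivative frechet_derivative f (at x)) (at x)"
    using assms frechet_derivative_works by blast
  have "frechet_derivative f (at x) = (\<lambda>h. grad f x \<bullet> h)"
  proof
    fix h
    show "frechet_derivative f (at x) h = grad f x \<bullet> h"
      using lin_scalar_expand[OF has_derivative_linear[OF d], of h]
      by (simp add: inner_vec_def pd_def mult.commute)
  qed
  with d show ?thesis by simp
qed

lemma pd_of:
  assumes "(f has_derivative f') (at x)"
  shows "pd i f x = f' (axis i 1)"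
  using frechet_derivative_at[OF assms] by (simp add: pd_def)

lemma has_derivative_grad:
  fixes f :: "real^'n \<Rightarrow> real"
  assumes "(f has_derivative f') (at x)"
  shows "f' = (\<lambda>h. grad f x \<bullet> h)"
proof -
  have "f differentiable (at x)" using assms differentiableI by blast
  from grad_works[OF this] assms show ?thesis using has_derivative_unique by blast
qed

lemma jac_works:
  fixes F :: "real^'n \<Rightarrow> real^'m"
  assumes "F differentiable (at x)"
  shows "(F has_derivative (\<lambda>h. jac F x *v h)) (at x)"
proof -
  have "jac F x = jacobian F (at x)" by (simp add: jac_def jacobian_def matrix_def)
  then show ?thesis using jacobian_works[THEN iffD1, OF assms] by simp
qed

lemma grad_has_derivative:
  fixes f :: "real^'n \<Rightarrow> real"
  assumes "\<And>i. pd i f differentiable (at x)"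
  shows "(grad f has_derivative (\<lambda>h. \<chi> i. grad (pd i f) x \<bullet> h)) (at x)"
proof -
  have "grad f = (\<lambda>y. \<chi> i. pd i f y)" by (simp add: grad_eq fun_eq_iff)
  moreover have "((\<lambda>y. \<chi> i. pd i f y) has_derivative (\<lambda>h. \<chi> i. grad (pd i f) x \<bullet> h)) (at x)"
    by (rule vec_has_derivative) (use grad_works[OF assms] in simp)
  ultimately show ?thesis by simp
qed

lemma hess_nth:
  fixes f :: "real^'n \<Rightarrow> real"
  assumes "\<And>i. pd i f differentiable (at x)"
  shows "hess f x $ i $ j = pd j (pd i f) x"
proof -
  have "frechet_derivative (grad f) (at x) = (\<lambda>h. \<chi> i. grad (pd i f) x \<bullet> h)"
    using frechet_derivative_at[OF grad_has_derivative[OF assms]] by simp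
  then have "hess f x $ i $ j = grad (pd i f) x \<bullet> axis j 1"
    by (simp add: hess_def jac_def)
  also have "\<dots> = pd j (pd i f) x" using cart_eq_inner_axis[of "grad (pd i f) x" j] by simp
  finally show ?thesis .
qed

lemma smooth_pd: "smooth_on U f \<Longrightarrow> smooth_on U (pd i f)"
  unfolding smooth_on_def
proof
  fix k assume "\<forall>k. Ck_on k U f"
  then have "Ck_on (Suc k) U f" by blast
  then show "Ck_on k U (pd i f)" by (simp add: pd_def[abs_def])
qed

lemma smooth_diff: "smooth_on U f \<Longrightarrow> x \<in> U \<Longrightarrow> f differentiable (at x)"
  unfolding smooth_on_def by (metis Ck_on.simps(2))

lemma smooth_cont: "smooth_on U f \<Longrightarrow> continuous_on U f"
  unfolding smooth_on_def by (metis Ck_on.simps(1))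

lemma line_deriv:
  fixes f :: "'a::real_normed_vector \<Rightarrow> real"
  assumes "(f has_derivative f') (at (p + s *\<^sub>R u))"
  shows "((\<lambda>s. f (p + s *\<^sub>R u)) has_real_derivative f' u) (at s)"
proof -
  have l: "((\<lambda>s. p + s *\<^sub>R u) has_derivative (\<lambda>h. h *\<^sub>R u)) (at s)"
    by (auto intro!: derivative_eq_intros)
  have "((\<lambda>s. f (p + s *\<^sub>R u)) has_derivative (\<lambda>h. f' (h *\<^sub>R u))) (at s)"
    using has_derivative_compose[OF l assms] by simp
  moreover have "(\<lambda>h. f' (h *\<^sub>R u)) = (*) (f' u)"
    using linear_scale[OF has_derivative_linear[OF assms]] by (auto simp: fun_eq_iff)
  ultimately show ?thesis by (simp add: has_field_derivative_def)
qed

lemma pd_line_deriv: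
  fixes f :: "real^'n \<Rightarrow> real"
  assumes "f differentiable (at (p + s *\<^sub>R axis i 1))"
  shows "((\<lambda>s. f (p + s *\<^sub>R axis i 1)) has_real_derivative pd i f (p + s *\<^sub>R axis i 1)) (at s)"
  using line_deriv[OF frechet_derivative_works[THEN iffD1, OF assms]] by (simp add: pd_def)

lemma mixed_mvt:
  fixes f :: "real^'n \<Rightarrow> real"
  assumes U: "open U" and ball: "ball x (3*t) \<subseteq> U" and t: "t > 0"
    and df: "\<And>y. y \<in> U \<Longrightarrow> f differentiable (at y)"
    and dpf: "\<And>y. y \<in> U \<Longrightarrow> pd a f differentiable (at y)"
  shows "\<exists>\<xi>. norm (\<xi> - x) \<le> 2*t \<and>
     f (x + t *\<^sub>R axis a 1 + t *\<^sub>R axis c 1) - f (x + t *\<^sub>R axis a 1)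
       - f (x + t *\<^sub>R axis c 1) + f x = t^2 * pd c (pd a f) \<xi>"
proof -
  let ?u = "axis a (1::real)" and ?v = "axis c (1::real)"
  have inU: "x + s *\<^sub>R ?u + r *\<^sub>R ?v \<in> U" if "0 \<le> s" "s \<le> t" "0 \<le> r" "r \<le> t" for s r
  proof -
    have "norm (s *\<^sub>R ?u + r *\<^sub>R ?v) \<le> s + r"
      using norm_triangle_ineq[of "s *\<^sub>R ?u" "r *\<^sub>R ?v"] that by simp
    moreover have "dist x (x + s *\<^sub>R ?u + r *\<^sub>R ?v) = norm (s *\<^sub>R ?u + r *\<^sub>R ?v)"
      by (simp add: dist_norm norm_minus_commute add.assoc add.commute)
    ultimately have "dist x (x + s *\<^sub>R ?u + r *\<^sub>R ?v) < 3*t" using that t by linarith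
    then show ?thesis using ball by auto
  qed
  define \<phi> where "\<phi> s = f (x + t *\<^sub>R ?v + s *\<^sub>R ?u) - f (x + s *\<^sub>R ?u)" for s
  have "\<exists>z. 0 < z \<and> z < t \<and> \<phi> t - \<phi> 0 = (t - 0) *
      (pd a f (x + t *\<^sub>R ?v + z *\<^sub>R ?u) - pd a f (x + z *\<^sub>R ?u))"
    unfolding \<phi>_def
  proof (rule MVT2[OF t])
    fix s assume s: "0 \<le> s" "s \<le> t"
    have 1: "x + t *\<^sub>R ?v + s *\<^sub>R ?u \<in> U" using inU[of s t] s t by (simp add: algebra_simps)
    have 2: "x + s *\<^sub>R ?u \<in> U" using inU[of s 0] s t by simp
    show "((\<lambda>s. f (x + t *\<^sub>R ?v + s *\<^sub>R ?u) - f (x + s *\<^sub>R ?u)) has_real_derivative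
       pd a f (x + t *\<^sub>R ?v + s *\<^sub>R ?u) - pd a f (x + s *\<^sub>R ?u)) (at s)"
      by (intro DERIV_diff pd_line_deriv df 1 2)
  qed
  then obtain z where z: "0 < z" "z < t" and eq1: "\<phi> t - \<phi> 0 = t *
      (pd a f (x + t *\<^sub>R ?v + z *\<^sub>R ?u) - pd a f (x + z *\<^sub>R ?u))" by auto
  have "\<exists>w. 0 < w \<and> w < t \<and> pd a f ((x + z *\<^sub>R ?u) + t *\<^sub>R ?v) - pd a f ((x + z *\<^sub>R ?u) + 0 *\<^sub>R ?v)
     = (t - 0) * pd c (pd a f) ((x + z *\<^sub>R ?u) + w *\<^sub>R ?v)"
  proof (rule MVT2[OF t])
    fix r assume r: "0 \<le> r" "r \<le> t"
    have "x + z *\<^sub>R ?u + r *\<^sub>R ?v \<in> U" using inU[of z r] r z by simp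
    then show "((\<lambda>r. pd a f ((x + z *\<^sub>R ?u) + r *\<^sub>R ?v)) has_real_derivative
        pd c (pd a f) ((x + z *\<^sub>R ?u) + r *\<^sub>R ?v)) (at r)"
      by (intro pd_line_deriv dpf)
  qed
  then obtain w where w: "0 < w" "w < t" and eq2: "pd a f ((x + z *\<^sub>R ?u) + t *\<^sub>R ?v) - pd a f (x + z *\<^sub>R ?u)
     = t * pd c (pd a f) ((x + z *\<^sub>R ?u) + w *\<^sub>R ?v)" by auto
  show ?thesis
  proof (intro exI conjI)
    have "norm (z *\<^sub>R ?u + w *\<^sub>R ?v) \<le> z + w"
      using norm_triangle_ineq[of "z *\<^sub>R ?u" "w *\<^sub>R ?v"] z w by simp
    then show "norm ((x + z *\<^sub>R ?u + w *\<^sub>R ?v) - x) \<le> 2*t" using z w by (simp add: algebra_simps)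
    have "f (x + t *\<^sub>R ?u + t *\<^sub>R ?v) - f (x + t *\<^sub>R ?u) - f (x + t *\<^sub>R ?v) + f x = \<phi> t - \<phi> 0"
      by (simp add: \<phi>_def algebra_simps)
    also have "\<dots> = t * (t * pd c (pd a f) ((x + z *\<^sub>R ?u) + w *\<^sub>R ?v))"
      using eq1 eq2 by (simp add: algebra_simps)
    finally show "f (x + t *\<^sub>R ?u + t *\<^sub>R ?v) - f (x + t *\<^sub>R ?u) - f (x + t *\<^sub>R ?v) + f x
       = t^2 * pd c (pd a f) (x + z *\<^sub>R ?u + w *\<^sub>R ?v)"
      by (simp add: power2_eq_square)
  qed
qed

lemma schwarz:
  fixes f :: "real^'n \<Rightarrow> real"
  assumes U: "open U" and x: "x \<in> U"
    and df: "\<And>y. y \<in> U \<Longrightarrow> f differentiable (at y)"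
    and da: "\<And>y. y \<in> U \<Longrightarrow> pd a f differentiable (at y)"
    and dc: "\<And>y. y \<in> U \<Longrightarrow> pd c f differentiable (at y)"
    and ca: "continuous_on U (pd c (pd a f))"
    and cc: "continuous_on U (pd a (pd c f))"
  shows "pd c (pd a f) x = pd a (pd c f) x"
proof (rule ccontr)
  assume ne: "pd c (pd a f) x \<noteq> pd a (pd c f) x"
  define e where "e = \<bar>pd c (pd a f) x - pd a (pd c f) x\<bar> / 2"
  have e: "e > 0" using ne by (simp add: e_def)
  obtain r where r: "r > 0" "ball x r \<subseteq> U" using U x open_contains_ball by blast
  have "isCont (pd c (pd a f)) x" using ca U x continuous_on_eq_continuous_at by blast
  then obtain d1 where d1: "d1 > 0" "\<And>y. dist y x < d1 \<Longrightarrow> dist (pd c (pd a f) y) (pd c (pd a f) x) < e"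
    using e unfolding continuous_at_eps_delta by blast
  have "isCont (pd a (pd c f)) x" using cc U x continuous_on_eq_continuous_at by blast
  then obtain d2 where d2: "d2 > 0" "\<And>y. dist y x < d2 \<Longrightarrow> dist (pd a (pd c f) y) (pd a (pd c f) x) < e"
    using e unfolding continuous_at_eps_delta by blast
  define t where "t = min (r/3) (min d1 d2 / 3)"
  have t: "t > 0" using r d1 d2 by (simp add: t_def)
  have b: "ball x (3*t) \<subseteq> U" using r by (auto simp: t_def)
  obtain \<xi> where \<xi>: "norm (\<xi> - x) \<le> 2*t" and eq1:
     "f (x + t *\<^sub>R axis a 1 + t *\<^sub>R axis c 1) - f (x + t *\<^sub>R axis a 1)
       - f (x + t *\<^sub>R axis c 1) + f x = t^2 * pd c (pd a f) \<xi>"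
    using mixed_mvt[OF U b t df da] by blast
  obtain \<eta> where \<eta>: "norm (\<eta> - x) \<le> 2*t" and eq2:
     "f (x + t *\<^sub>R axis c 1 + t *\<^sub>R axis a 1) - f (x + t *\<^sub>R axis c 1)
       - f (x + t *\<^sub>R axis a 1) + f x = t^2 * pd a (pd c f) \<eta>"
    using mixed_mvt[OF U b t df dc] by blast
  have "t^2 * pd c (pd a f) \<xi> = t^2 * pd a (pd c f) \<eta>"
    using eq1 eq2 by (simp add: algebra_simps)
  then have eq: "pd c (pd a f) \<xi> = pd a (pd c f) \<eta>" using t by simp
  have "dist \<xi> x < d1" using \<xi> t d1 d2 by (simp add: dist_norm t_def)
  then have 1: "\<bar>pd c (pd a f) \<xi> - pd c (pd a f) x\<bar> < e" using d1 by (simp add: dist_real_def)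
  have "dist \<eta> x < d2" using \<eta> t d1 d2 by (simp add: dist_norm t_def)
  then have 2: "\<bar>pd a (pd c f) \<eta> - pd a (pd c f) x\<bar> < e" using d2 by (simp add: dist_real_def)
  from 1 2 eq have "\<bar>pd c (pd a f) x - pd a (pd c f) x\<bar> < 2 * e" by linarith
  then show False by (simp add: e_def)
qed

lemma schwarz_smooth:
  fixes f :: "real^'n \<Rightarrow> real"
  assumes U: "open U" and x: "x \<in> U" and s: "smooth_on U f"
  shows "pd c (pd a f) x = pd a (pd c f) x"
  by (rule schwarz[OF U x]) (use s in \<open>auto intro: smooth_diff smooth_pd smooth_cont\<close>)



definition mnorm :: "real^'n^'m \<Rightarrow> real" where
  "mnorm A = (\<Sum>i\<in>UNIV. \<Sum>j\<in>UNIV. \<bar>A $ i $ j\<bar>)"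

definition tr :: "real^'n^'n \<Rightarrow> real" where
  "tr A = (\<Sum>i\<in>UNIV. A $ i $ i)"

lemma mnorm_mv: "norm (A *v x) \<le> mnorm A * norm x"
  using onorm_le_matrix_component_sum[of A] onorm[OF matrix_vector_mul_bounded_linear, of A x]
  unfolding mnorm_def by (meson mult_right_mono norm_ge_zero order_trans)

lemma mnorm_nonneg: "mnorm A \<ge> 0"
  unfolding mnorm_def by (intro sum_nonneg) auto

lemma entry_le_norm: "\<bar>(A::real^'n^'m) $ i $ j\<bar> \<le> norm A"
  using component_le_norm_cart[of "A$i" j] Finite_Cartesian_Product.norm_nth_le[of A i] by linarith

lemma tr_add: "tr (A + B) = tr A + tr B" by (simp add: tr_def sum.distrib)
lemma tr_diff: "tr (A - B) = tr A - tr B" by (simp add: tr_def sum_subtractf)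
lemma tr_scale: "tr (c *\<^sub>R A) = c * tr A" by (simp add: tr_def sum_distrib_left)

lemma tr_mult_bound: "\<bar>tr (D ** M)\<bar> \<le> mnorm D * norm M"
proof -
  have "\<bar>tr (D ** M)\<bar> \<le> (\<Sum>i\<in>UNIV. \<bar>(D ** M) $ i $ i\<bar>)" unfolding tr_def by (rule sum_abs)
  also have "\<dots> \<le> (\<Sum>i\<in>UNIV. \<Sum>k\<in>UNIV. \<bar>D $ i $ k\<bar> * norm M)"
  proof (rule sum_mono)
    fix i
    have "\<bar>(D ** M) $ i $ i\<bar> = \<bar>\<Sum>k\<in>UNIV. D $ i $ k * M $ k $ i\<bar>"
      by (simp add: matrix_matrix_mult_def)
    also have "\<dots> \<le> (\<Sum>k\<in>UNIV. \<bar>D $ i $ k * M $ k $ i\<bar>)" by (rule sum_abs)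
    also have "\<dots> \<le> (\<Sum>k\<in>UNIV. \<bar>D $ i $ k\<bar> * norm M)"
      by (rule sum_mono) (simp add: abs_mult entry_le_norm mult_left_mono)
    finally show "\<bar>(D ** M) $ i $ i\<bar> \<le> (\<Sum>k\<in>UNIV. \<bar>D $ i $ k\<bar> * norm M)" .
  qed
  finally show ?thesis by (simp add: mnorm_def sum_distrib_right)
qed

lemma small_zero:
  fixes X :: real
  assumes e0: "e0 > 0" and b: "\<And>\<epsilon>. 0 < \<epsilon> \<Longrightarrow> \<epsilon> < e0 \<Longrightarrow> \<bar>X\<bar> \<le> \<epsilon> * C"
  shows "X = 0"
proof (rule ccontr)
  assume "X \<noteq> 0"
  then have X: "\<bar>X\<bar> > 0" by simp
  define \<epsilon> where "\<epsilon> = min e0 (\<bar>X\<bar> / (\<bar>C\<bar> + 1)) / 2"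
  have ep: "0 < \<epsilon>" "\<epsilon> < e0" using e0 X by (auto simp: \<epsilon>_def)
  have "\<epsilon> * (\<bar>C\<bar> + 1) \<le> \<bar>X\<bar> / 2"
  proof -
    have "min e0 (\<bar>X\<bar> / (\<bar>C\<bar> + 1)) \<le> \<bar>X\<bar> / (\<bar>C\<bar> + 1)" by simp
    then have "\<epsilon> \<le> (\<bar>X\<bar> / (\<bar>C\<bar> + 1)) / 2" unfolding \<epsilon>_def by (rule divide_right_mono) simp
    then have "\<epsilon> * (\<bar>C\<bar> + 1) \<le> (\<bar>X\<bar> / (\<bar>C\<bar> + 1)) / 2 * (\<bar>C\<bar> + 1)"
      by (intro mult_right_mono) auto
    also have "\<dots> = \<bar>X\<bar> / 2" by (simp add: field_simps)
    finally show ?thesis .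
  qed
  moreover have "\<epsilon> * C \<le> \<epsilon> * (\<bar>C\<bar> + 1)" using ep by (intro mult_left_mono) auto
  ultimately show False using b[OF ep] X by linarith
qed

lemma HJ_alg:
  fixes q l bx :: "real^'n" and Q J A D :: "real^'n^'n"
    and \<rho> :: "real \<Rightarrow> real^'n" and H :: "real \<Rightarrow> real^'n^'n"
  assumes e0: "e0 > 0"
    and rho: "\<And>\<epsilon>. 0 < \<epsilon> \<Longrightarrow> \<epsilon> < e0 \<Longrightarrow> norm (\<rho> \<epsilon>) \<le> K * \<epsilon> \<and> norm (H \<epsilon>) \<le> K * \<epsilon>"
    and eq: "\<And>\<epsilon>. 0 < \<epsilon> \<Longrightarrow> \<epsilon> < e0 \<Longrightarrow>
      (- (1/\<epsilon>) *\<^sub>R q + l + \<rho> \<epsilon>) \<bullet> (bx + D *v q - \<epsilon> *\<^sub>R (D *v (l + \<rho> \<epsilon>)))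
       + tr (A + D ** Q - \<epsilon> *\<^sub>R (D ** (J + H \<epsilon>))) = 0"
  shows "q \<bullet> (bx + D *v q) = 0"
proof -
  define W where "W = norm l + \<bar>K\<bar>"
  define C where "C = norm q * mnorm D * W + W * norm (bx + D *v q) + mnorm D * W * W
     + \<bar>tr (A + D ** Q)\<bar> + mnorm D * (norm J + \<bar>K\<bar>)"
  show ?thesis
  proof (rule small_zero[of "min e0 1" _ C])
    show "min e0 1 > 0" using e0 by simp
    fix \<epsilon> :: real assume ep: "0 < \<epsilon>" "\<epsilon> < min e0 1"
    define w where "w = l + \<rho> \<epsilon>"
    have W0: "W \<ge> 0" by (simp add: W_def)
    have r: "norm (\<rho> \<epsilon>) \<le> K * \<epsilon>" "norm (H \<epsilon>) \<le> K * \<epsilon>" using rho ep by auto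
    have K0: "K \<ge> 0" using r(1) ep by (smt (verit) norm_ge_zero zero_le_mult_iff)
    have "norm (\<rho> \<epsilon>) \<le> K" using r(1) ep K0 by (smt (verit) mult_left_le)
    then have wW: "norm w \<le> W" unfolding w_def W_def using norm_triangle_ineq[of l "\<rho> \<epsilon>"] by linarith
    have HK: "norm (H \<epsilon>) \<le> K" using r(2) ep K0 by (smt (verit) mult_left_le)
    have e1: "\<epsilon> * ((- (1/\<epsilon>) *\<^sub>R q + l + \<rho> \<epsilon>) \<bullet> (bx + D *v q - \<epsilon> *\<^sub>R (D *v (l + \<rho> \<epsilon>)))
       + tr (A + D ** Q - \<epsilon> *\<^sub>R (D ** (J + H \<epsilon>)))) = 0"
      using eq[of \<epsilon>] ep by simp
    have "\<epsilon> * ((- (1/\<epsilon>) *\<^sub>R q + l + \<rho> \<epsilon>) \<bullet> (bx + D *v q - \<epsilon> *\<^sub>R (D *v (l + \<rho> \<epsilon>)))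
       + tr (A + D ** Q - \<epsilon> *\<^sub>R (D ** (J + H \<epsilon>))))
      = - (q \<bullet> (bx + D *v q)) + \<epsilon> * (q \<bullet> (D *v w) + w \<bullet> (bx + D *v q) - \<epsilon> * (w \<bullet> (D *v w))
         + tr (A + D ** Q) - \<epsilon> * tr (D ** (J + H \<epsilon>)))"
      using ep unfolding w_def by (simp add: inner_add_left inner_diff_right inner_add_right tr_diff tr_scale
          algebra_simps)
    then have X: "q \<bullet> (bx + D *v q) = \<epsilon> * (q \<bullet> (D *v w) + w \<bullet> (bx + D *v q) - \<epsilon> * (w \<bullet> (D *v w))
         + tr (A + D ** Q) - \<epsilon> * tr (D ** (J + H \<epsilon>)))" using e1 by linarith
    have mD: "mnorm D \<ge> 0" by (rule mnorm_nonneg)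
    have b1: "\<bar>q \<bullet> (D *v w)\<bar> \<le> norm q * mnorm D * W"
    proof -
      have "\<bar>q \<bullet> (D *v w)\<bar> \<le> norm q * norm (D *v w)" by (rule Cauchy_Schwarz_ineq2)
      also have "\<dots> \<le> norm q * (mnorm D * W)"
        using mnorm_mv[of D w] wW mD by (intro mult_left_mono) (auto intro: order_trans mult_left_mono)
      finally show ?thesis by (simp add: mult.assoc)
    qed
    have b2: "\<bar>w \<bullet> (bx + D *v q)\<bar> \<le> W * norm (bx + D *v q)"
      using Cauchy_Schwarz_ineq2[of w "bx + D *v q"] wW by (meson mult_right_mono norm_ge_zero order_trans)
    have b3: "\<bar>\<epsilon> * (w \<bullet> (D *v w))\<bar> \<le> mnorm D * W * W"
    proof -
      have "\<bar>w \<bullet> (D *v w)\<bar> \<le> norm w * norm (D *v w)" by (rule Cauchy_Schwarz_ineq2)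
      also have "\<dots> \<le> W * (mnorm D * W)"
        using mnorm_mv[of D w] wW mD W0 by (intro mult_mono) (auto intro: order_trans mult_left_mono)
      finally have "\<bar>w \<bullet> (D *v w)\<bar> \<le> mnorm D * W * W" by (simp add: algebra_simps)
      moreover have "\<bar>\<epsilon>\<bar> \<le> 1" using ep by simp
      ultimately show ?thesis using mD W0
        by (simp add: abs_mult) (metis abs_ge_zero mult_le_one mult_right_mono mult.commute mult_left_le_one_le order_trans zero_le_mult_iff)
    qed
    have b4: "\<bar>\<epsilon> * tr (D ** (J + H \<epsilon>))\<bar> \<le> mnorm D * (norm J + \<bar>K\<bar>)"
    proof -
      have "\<bar>tr (D ** (J + H \<epsilon>))\<bar> \<le> mnorm D * norm (J + H \<epsilon>)" by (rule tr_mult_bound)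
      also have "\<dots> \<le> mnorm D * (norm J + \<bar>K\<bar>)"
        using norm_triangle_ineq[of J "H \<epsilon>"] HK mD by (intro mult_left_mono) auto
      finally have t: "\<bar>tr (D ** (J + H \<epsilon>))\<bar> \<le> mnorm D * (norm J + \<bar>K\<bar>)" .
      have "\<bar>\<epsilon> * tr (D ** (J + H \<epsilon>))\<bar> \<le> \<bar>tr (D ** (J + H \<epsilon>))\<bar>"
        using ep by (simp add: abs_mult mult_left_le_one_le)
      with t show ?thesis by linarith
    qed
    have "\<bar>q \<bullet> (D *v w) + w \<bullet> (bx + D *v q) - \<epsilon> * (w \<bullet> (D *v w))
         + tr (A + D ** Q) - \<epsilon> * tr (D ** (J + H \<epsilon>))\<bar> \<le> C"
      unfolding C_def using b1 b2 b3 b4 by linarith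
    then show "\<bar>q \<bullet> (bx + D *v q)\<bar> \<le> \<epsilon> * C"
      unfolding X abs_mult using ep by (simp add: mult_left_mono)
  qed
qed



lemma mv_axis_nth: "((M::real^'n^'m) *v axis j 1) $ i = M $ i $ j"
  by (simp add: matrix_vector_mult_basis column_def)

lemma divg_has:
  assumes "(F has_derivative F') (at x)"
  shows "divg F x = (\<Sum>i\<in>UNIV. F' (axis i 1) $ i)"
  using frechet_derivative_at[OF assms] by (simp add: divg_def)

lemma grad_from_has:
  fixes f :: "real^'n \<Rightarrow> real"
  assumes "(f has_derivative (\<lambda>h. v \<bullet> h)) (at x)"
  shows "grad f x = v"
proof -
  have "(\<lambda>h. v \<bullet> h) = (\<lambda>h. grad f x \<bullet> h)" by (rule has_derivative_grad[OF assms])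
  then have "\<And>i. v \<bullet> axis i 1 = grad f x \<bullet> axis i 1" by metis
  then show ?thesis by (simp add: vec_eq_iff cart_eq_inner_axis)
qed

lemma flux_identity:
  fixes P \<psi> :: "real^'n \<Rightarrow> real" and G :: "real^'n \<Rightarrow> real^'n"
    and b :: "real^'n \<Rightarrow> real^'n" and D JG Ab :: "real^'n^'n"
  assumes U: "open U" and x: "x \<in> U"
    and P_eq: "\<And>y. y \<in> U \<Longrightarrow> P y = a * exp (\<psi> y)"
    and P_pos: "P x > 0"
    and \<psi>d: "\<And>y. y \<in> U \<Longrightarrow> (\<psi> has_derivative (\<lambda>h. G y \<bullet> h)) (at y)"
    and Gd: "(G has_derivative (\<lambda>h. JG *v h)) (at x)"
    and bd: "(b has_derivative (\<lambda>h. Ab *v h)) (at x)"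
    and st: "divg (flux b D \<epsilon> P) x = 0"
  shows "G x \<bullet> (b x - \<epsilon> *\<^sub>R (D *v G x)) + tr (Ab - \<epsilon> *\<^sub>R (D ** JG)) = 0"
proof -
  have Pd: "(P has_derivative (\<lambda>h. P y * (G y \<bullet> h))) (at y)" if y: "y \<in> U" for y
  proof -
    have "((\<lambda>y. a * exp (\<psi> y)) has_derivative (\<lambda>h. a * (exp (\<psi> y) * (G y \<bullet> h)))) (at y)"
      by (auto intro!: derivative_eq_intros \<psi>d[OF y])
    then have "((\<lambda>y. a * exp (\<psi> y)) has_derivative (\<lambda>h. P y * (G y \<bullet> h))) (at y)"
      using P_eq[OF y] by (simp add: mult.assoc)
    then show ?thesis
      by (rule has_derivative_transform_within_open[OF _ U y]) (simp add: P_eq)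
  qed
  have gP: "grad P y = P y *\<^sub>R G y" if "y \<in> U" for y
    using Pd[OF that] by (intro grad_from_has) simp
  define V where "V y = b y - \<epsilon> *\<^sub>R (D *v G y)" for y
  have feq: "flux b D \<epsilon> P y = P y *\<^sub>R V y" if "y \<in> U" for y
    using gP[OF that] by (simp add: flux_def V_def algebra_simps matrix_vector_mult_scaleR)
  have Vd: "(V has_derivative (\<lambda>h. Ab *v h - \<epsilon> *\<^sub>R (D *v (JG *v h)))) (at x)"
  proof -
    have 1: "((\<lambda>y. D *v G y) has_derivative (\<lambda>h. D *v (JG *v h))) (at x)"
      using bounded_linear.has_derivative[OF matrix_vector_mul_bounded_linear[of D] Gd] by simp
    show ?thesis unfolding V_def
      by (rule has_derivative_diff[OF bd has_derivative_scaleR_right[OF 1]])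
  qed
  have "((\<lambda>y. P y *\<^sub>R V y) has_derivative
        (\<lambda>h. P x *\<^sub>R (Ab *v h - \<epsilon> *\<^sub>R (D *v (JG *v h))) + (P x * (G x \<bullet> h)) *\<^sub>R V x)) (at x)"
    by (rule has_derivative_scaleR[OF Pd[OF x] Vd])
  then have fd: "(flux b D \<epsilon> P has_derivative
        (\<lambda>h. P x *\<^sub>R (Ab *v h - \<epsilon> *\<^sub>R (D *v (JG *v h))) + (P x * (G x \<bullet> h)) *\<^sub>R V x)) (at x)"
    by (rule has_derivative_transform_within_open[OF _ U x]) (simp add: feq)
  have "0 = (\<Sum>i\<in>UNIV. (P x *\<^sub>R (Ab *v axis i 1 - \<epsilon> *\<^sub>R (D *v (JG *v axis i 1)))
        + (P x * (G x \<bullet> axis i 1)) *\<^sub>R V x) $ i)"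
    using divg_has[OF fd] st by simp
  also have "\<dots> = (\<Sum>i\<in>UNIV. P x * (Ab - \<epsilon> *\<^sub>R (D ** JG)) $ i $ i + P x * (G x $ i * V x $ i))"
    by (intro sum.cong refl)
       (simp add: matrix_vector_mul_assoc mv_axis_nth cart_eq_inner_axis[symmetric] algebra_simps)
  also have "\<dots> = P x * (tr (Ab - \<epsilon> *\<^sub>R (D ** JG)) + G x \<bullet> V x)"
    by (simp add: tr_def inner_vec_def sum.distrib sum_distrib_left sum_subtractf algebra_simps)
  finally show ?thesis using P_pos by (simp add: V_def add.commute)
qed



lemma smooth_grad_has:
  fixes f :: "real^'n \<Rightarrow> real"
  assumes "smooth_on U f" "x \<in> U"
  shows "(grad f has_derivative (\<lambda>h. hess f x *v h)) (at x)"
proof -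
  have "\<And>i. pd i f differentiable (at x)" using assms smooth_pd smooth_diff by blast
  then have "grad f differentiable (at x)" using grad_has_derivative differentiableI by blast
  from jac_works[OF this] show ?thesis by (simp add: hess_def)
qed

lemma mv_uminus: "(- (M::real^'n^'m)) *v h = - (M *v h)"
  by (simp add: matrix_vector_mult_def vec_eq_iff sum_negf)

lemma mm_scaleR: "(D::real^'n^'m) ** (c *\<^sub>R M) = c *\<^sub>R (D ** M)"
  by (simp add: matrix_matrix_mult_def vec_eq_iff sum_distrib_left algebra_simps)

lemma mm_diff: "(D::real^'n^'m) ** (A - B) = D ** A - D ** B"
  by (simp add: matrix_matrix_mult_def vec_eq_iff sum_subtractf algebra_simps)

lemma mm_uminus: "(D::real^'n^'m) ** (- M) = - (D ** M)"
  by (simp add: matrix_matrix_mult_def vec_eq_iff sum_negf)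

lemma pd_local:
  assumes U: "open U" and x: "x \<in> U" and eq: "\<And>y. y \<in> U \<Longrightarrow> f y = g y"
  shows "pd k f x = pd k g x"
proof -
  have "\<And>f'. (f has_derivative f') (at x) \<longleftrightarrow> (g has_derivative f') (at x)"
    using has_derivative_transform_within_open[OF _ U x, of f _ UNIV g]
          has_derivative_transform_within_open[OF _ U x, of g _ UNIV f] eq by auto
  then show ?thesis by (simp add: pd_def frechet_derivative_def)
qed

lemma diff_local:
  assumes U: "open U" and x: "x \<in> U" and eq: "\<And>y. y \<in> U \<Longrightarrow> f y = g y"
    and d: "g differentiable (at x)"
  shows "f differentiable (at x)"
  using d has_derivative_transform_within_open[OF _ U x, of g _ UNIV f] eq
  unfolding differentiable_def by metis

lemma ln_grad_has:
  fixes \<omega> :: "real^'n \<Rightarrow> real"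
  assumes U: "open U" and s: "smooth_on U \<omega>" and pos: "\<And>y. y \<in> U \<Longrightarrow> \<omega> y > 0" and x: "x \<in> U"
  shows "((\<lambda>y. ln (\<omega> y)) has_derivative (\<lambda>h. grad (\<lambda>y. ln (\<omega> y)) x \<bullet> h)) (at x)"
    and "(grad (\<lambda>y. ln (\<omega> y)) has_derivative (\<lambda>h. hess (\<lambda>y. ln (\<omega> y)) x *v h)) (at x)"
proof -
  have Ld: "((\<lambda>y. ln (\<omega> y)) has_derivative (\<lambda>h. (grad \<omega> y \<bullet> h) / \<omega> y)) (at y)" if y: "y \<in> U" for y
  proof -
    have "(\<omega> has_derivative (\<lambda>h. grad \<omega> y \<bullet> h)) (at y)" using grad_works smooth_diff s y by blast
    then show ?thesis using pos[OF y]
      by (auto intro!: derivative_eq_intros simp: field_simps)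
  qed
  then show "((\<lambda>y. ln (\<omega> y)) has_derivative (\<lambda>h. grad (\<lambda>y. ln (\<omega> y)) x \<bullet> h)) (at x)"
    using x grad_works differentiableI by blast
  have "pd i (\<lambda>y. ln (\<omega> y)) differentiable (at x)" for i
  proof (rule diff_local[OF U x])
    show "pd i (\<lambda>y. ln (\<omega> y)) y = pd i \<omega> y / \<omega> y" if "y \<in> U" for y
      using pd_of[OF Ld[OF that], of i] by (simp add: cart_eq_inner_axis[symmetric])
    show "(\<lambda>y. pd i \<omega> y / \<omega> y) differentiable (at x)"
      using smooth_diff[OF smooth_pd[OF s] x] smooth_diff[OF s x] pos[OF x] by simp
  qed
  then have "grad (\<lambda>y. ln (\<omega> y)) differentiable (at x)" using grad_has_derivative differentiableI by blast
  from jac_works[OF this] show "(grad (\<lambda>y. ln (\<omega> y)) has_derivative (\<lambda>h. hess (\<lambda>y. ln (\<omega> y)) x *v h)) (at x)"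
    by (simp add: hess_def)
qed

lemma HJ_U:
  fixes b :: "real^'n \<Rightarrow> real^'n" and A :: "real^'n \<Rightarrow> real^'n^'n"
    and D :: "real^'n^'n"
    and \<pi> :: "real \<Rightarrow> real^'n \<Rightarrow> real" and ahat :: "real \<Rightarrow> real"
    and \<phi> \<omega> :: "real^'n \<Rightarrow> real" and R :: "real \<Rightarrow> real^'n \<Rightarrow> real"
    and U :: "(real^'n) set"
  assumes A_jac: "\<And>x. (b has_derivative (\<lambda>h. A x *v h)) (at x)"
    and \<pi>_pos: "\<And>\<epsilon> x. \<epsilon> > 0 \<Longrightarrow> \<pi> \<epsilon> x > 0"
    and stationary: "\<And>\<epsilon> x. \<epsilon> > 0 \<Longrightarrow> divg (flux b D \<epsilon> (\<pi> \<epsilon>)) x = 0"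
    and U_open: "open U"
    and \<phi>_smooth: "smooth_on U \<phi>"
    and \<omega>_smooth: "smooth_on U \<omega>" and \<omega>_pos: "\<And>x. x \<in> U \<Longrightarrow> \<omega> x > 0"
    and R_smooth: "\<And>\<epsilon>. \<epsilon> > 0 \<Longrightarrow> smooth_on U (R \<epsilon>)"
    and WKB: "\<And>\<epsilon> x. \<epsilon> > 0 \<Longrightarrow> x \<in> U \<Longrightarrow>
               \<pi> \<epsilon> x = ahat \<epsilon> * exp (- \<phi> x / \<epsilon> + ln (\<omega> x) + R \<epsilon> x)"
    and R_small: "\<exists>K \<epsilon>0. \<epsilon>0 > 0 \<and> (\<forall>\<epsilon> x. 0 < \<epsilon> \<and> \<epsilon> < \<epsilon>0 \<and> x \<in> U \<longrightarrow>
               \<bar>R \<epsilon> x\<bar> \<le> K * \<epsilon> \<and> norm (grad (R \<epsilon>) x) \<le> K * \<epsilon> \<and>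
               norm (hess (R \<epsilon>) x) \<le> K * \<epsilon>)"
    and x: "x \<in> U"
  shows "grad \<phi> x \<bullet> (b x + D *v grad \<phi> x) = 0"
proof -
  obtain K e0 where e0: "e0 > 0" and Kb: "\<And>\<epsilon> x. 0 < \<epsilon> \<Longrightarrow> \<epsilon> < e0 \<Longrightarrow> x \<in> U \<Longrightarrow>
        norm (grad (R \<epsilon>) x) \<le> K * \<epsilon> \<and> norm (hess (R \<epsilon>) x) \<le> K * \<epsilon>"
    using R_small by blast
  define L where "L = (\<lambda>y. ln (\<omega> y))"
  show ?thesis
  proof (rule HJ_alg[OF e0, where \<rho> = "\<lambda>\<epsilon>. grad (R \<epsilon>) x" and H = "\<lambda>\<epsilon>. hess (R \<epsilon>) x"
        and l = "grad L x" and J = "hess L x" and Q = "hess \<phi> x" and A = "A x"])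
    fix \<epsilon> :: real assume ep: "0 < \<epsilon>" "\<epsilon> < e0"
    show "norm (grad (R \<epsilon>) x) \<le> K * \<epsilon> \<and> norm (hess (R \<epsilon>) x) \<le> K * \<epsilon>" using Kb ep x by blast
    define \<psi> where "\<psi> y = - \<phi> y / \<epsilon> + ln (\<omega> y) + R \<epsilon> y" for y
    define G where "G y = - (1/\<epsilon>) *\<^sub>R grad \<phi> y + grad L y + grad (R \<epsilon>) y" for y
    define JG where "JG = - (1/\<epsilon>) *\<^sub>R hess \<phi> x + hess L x + hess (R \<epsilon>) x"
    have \<psi>d: "(\<psi> has_derivative (\<lambda>h. G y \<bullet> h)) (at y)" if y: "y \<in> U" for y
    proof -
      have 1: "(\<phi> has_derivative (\<lambda>h. grad \<phi> y \<bullet> h)) (at y)"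
        using grad_works smooth_diff \<phi>_smooth y by blast
      have 2: "(R \<epsilon> has_derivative (\<lambda>h. grad (R \<epsilon>) y \<bullet> h)) (at y)"
        using grad_works smooth_diff R_smooth[OF ep(1)] y by blast
      have 3: "(L has_derivative (\<lambda>h. grad L y \<bullet> h)) (at y)"
        unfolding L_def using ln_grad_has(1)[OF U_open \<omega>_smooth \<omega>_pos y] .
      have "((\<lambda>y. - \<phi> y / \<epsilon> + L y + R \<epsilon> y) has_derivative
          (\<lambda>h. - (grad \<phi> y \<bullet> h) / \<epsilon> + grad L y \<bullet> h + grad (R \<epsilon>) y \<bullet> h)) (at y)"
        by (intro derivative_eq_intros) (use 1 2 3 ep in auto)
      moreover have "\<psi> = (\<lambda>y. - \<phi> y / \<epsilon> + L y + R \<epsilon> y)" by (simp add: fun_eq_iff \<psi>_def L_def)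
      moreover have "(\<lambda>h. G y \<bullet> h) = (\<lambda>h. - (grad \<phi> y \<bullet> h) / \<epsilon> + grad L y \<bullet> h + grad (R \<epsilon>) y \<bullet> h)"
        by (simp add: fun_eq_iff G_def inner_add_left inner_diff_left)
      ultimately show ?thesis by simp
    qed
    have Gd: "(G has_derivative (\<lambda>h. JG *v h)) (at x)"
    proof -
      have 1: "(grad \<phi> has_derivative (\<lambda>h. hess \<phi> x *v h)) (at x)"
        using smooth_grad_has[OF \<phi>_smooth x] .
      have 2: "(grad (R \<epsilon>) has_derivative (\<lambda>h. hess (R \<epsilon>) x *v h)) (at x)"
        using smooth_grad_has[OF R_smooth[OF ep(1)] x] .
      have 3: "(grad L has_derivative (\<lambda>h. hess L x *v h)) (at x)"
        unfolding L_def using ln_grad_has(2)[OF U_open \<omega>_smooth \<omega>_pos x] .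
      have "(G has_derivative (\<lambda>h. - (1/\<epsilon>) *\<^sub>R (hess \<phi> x *v h) + hess L x *v h + hess (R \<epsilon>) x *v h)) (at x)"
        unfolding G_def by (intro has_derivative_add has_derivative_scaleR_right 1 2 3)
      then show ?thesis
        by (simp add: JG_def matrix_vector_mult_add_rdistrib matrix_vector_mult_diff_rdistrib scaleR_matrix_vector_assoc mv_uminus)
    qed
    have fi: "G x \<bullet> (b x - \<epsilon> *\<^sub>R (D *v G x)) + tr (A x - \<epsilon> *\<^sub>R (D ** JG)) = 0"
      by (rule flux_identity[OF U_open x _ \<pi>_pos[OF ep(1)] \<psi>d Gd A_jac stationary[OF ep(1)]])
         (simp add: WKB[OF ep(1)] \<psi>_def)
    have e1: "b x - \<epsilon> *\<^sub>R (D *v G x) = b x + D *v grad \<phi> x - \<epsilon> *\<^sub>R (D *v (grad L x + grad (R \<epsilon>) x))"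
      using ep by (simp add: G_def algebra_simps)
    have e2: "A x - \<epsilon> *\<^sub>R (D ** JG) = A x + D ** hess \<phi> x - \<epsilon> *\<^sub>R (D ** (hess L x + hess (R \<epsilon>) x))"
      using ep by (simp add: JG_def matrix_add_ldistrib mm_diff mm_scaleR mm_uminus algebra_simps)
    show "(- (1/\<epsilon>) *\<^sub>R grad \<phi> x + grad L x + grad (R \<epsilon>) x) \<bullet>
        (b x + D *v grad \<phi> x - \<epsilon> *\<^sub>R (D *v (grad L x + grad (R \<epsilon>) x)))
      + tr (A x + D ** hess \<phi> x - \<epsilon> *\<^sub>R (D ** (hess L x + hess (R \<epsilon>) x))) = 0"
      using fi unfolding e1 e2 by (simp add: G_def)
  qed
qed



lemma ricc_alg:
  fixes G A D T :: "real^'n^'n"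
  assumes Gs: "\<And>i j. G $ i $ j = G $ j $ i" and Ds: "transpose D = D"
    and id: "\<And>l k. T $ l $ k + (\<Sum>i\<in>UNIV. G $ i $ l * (A $ i $ k + (\<Sum>j\<in>UNIV. D $ i $ j * G $ j $ k))
         + G $ i $ k * (A $ i $ l + (\<Sum>j\<in>UNIV. D $ i $ j * G $ j $ l))) = 0"
  shows "T = - (G ** A) - transpose A ** G - 2 *\<^sub>R (G ** D ** G)"
proof -
  have Dij: "\<And>i j. D $ i $ j = D $ j $ i" using Ds by (metis transpose_def vec_lambda_beta)
  show ?thesis
  proof (simp add: vec_eq_iff, intro allI)
    fix l k
    have s1: "(\<Sum>i\<in>UNIV. G $ i $ k * (\<Sum>j\<in>UNIV. D $ i $ j * G $ j $ l))
        = (\<Sum>i\<in>UNIV. G $ i $ l * (\<Sum>j\<in>UNIV. D $ i $ j * G $ j $ k))"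
    proof -
      have "(\<Sum>i\<in>UNIV. G $ i $ k * (\<Sum>j\<in>UNIV. D $ i $ j * G $ j $ l))
          = (\<Sum>i\<in>UNIV. \<Sum>j\<in>UNIV. G $ i $ k * D $ i $ j * G $ j $ l)"
        by (simp add: sum_distrib_left mult.assoc)
      also have "\<dots> = (\<Sum>j\<in>UNIV. \<Sum>i\<in>UNIV. G $ i $ k * D $ i $ j * G $ j $ l)" by (rule sum.swap)
      also have "\<dots> = (\<Sum>j\<in>UNIV. G $ j $ l * (\<Sum>i\<in>UNIV. D $ j $ i * G $ i $ k))"
        by (simp add: sum_distrib_left Dij algebra_simps)
      finally show ?thesis .
    qed
    have s2: "(G ** D ** G) $ l $ k = (\<Sum>i\<in>UNIV. G $ i $ l * (\<Sum>j\<in>UNIV. D $ i $ j * G $ j $ k))"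
    proof -
      have "(G ** D ** G) $ l $ k = (\<Sum>j\<in>UNIV. (\<Sum>i\<in>UNIV. G $ l $ i * D $ i $ j) * G $ j $ k)"
        by (simp add: matrix_matrix_mult_def)
      also have "\<dots> = (\<Sum>j\<in>UNIV. \<Sum>i\<in>UNIV. G $ i $ l * D $ i $ j * G $ j $ k)"
        by (simp add: sum_distrib_right Gs)
      also have "\<dots> = (\<Sum>i\<in>UNIV. \<Sum>j\<in>UNIV. G $ i $ l * D $ i $ j * G $ j $ k)" by (rule sum.swap)
      also have "\<dots> = (\<Sum>i\<in>UNIV. G $ i $ l * (\<Sum>j\<in>UNIV. D $ i $ j * G $ j $ k))"
        by (simp add: sum_distrib_left mult.assoc)
      finally show ?thesis .
    qed
    have s3: "(G ** A) $ l $ k = (\<Sum>i\<in>UNIV. G $ i $ l * A $ i $ k)"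
      by (simp add: matrix_matrix_mult_def Gs)
    have s4: "(transpose A ** G) $ l $ k = (\<Sum>i\<in>UNIV. G $ i $ k * A $ i $ l)"
      by (simp add: matrix_matrix_mult_def transpose_def mult.commute)
    have "T $ l $ k = - (\<Sum>i\<in>UNIV. G $ i $ l * A $ i $ k) - (\<Sum>i\<in>UNIV. G $ i $ k * A $ i $ l)
        - (\<Sum>i\<in>UNIV. G $ i $ l * (\<Sum>j\<in>UNIV. D $ i $ j * G $ j $ k))
        - (\<Sum>i\<in>UNIV. G $ i $ k * (\<Sum>j\<in>UNIV. D $ i $ j * G $ j $ l))"
      using id[of l k] by (simp add: sum.distrib distrib_left algebra_simps)
    then show "T $ l $ k = - (G ** A) $ l $ k - (transpose A ** G) $ l $ k - 2 * (G ** D ** G) $ l $ k"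
      using s1 s2 s3 s4 by simp
  qed
qed



lemma zero_deriv:
  assumes U: "open U" and x: "x \<in> U" and z: "\<And>y. y \<in> U \<Longrightarrow> f y = 0"
    and d: "(f has_derivative f') (at x)"
  shows "f' v = 0"
proof -
  have "((\<lambda>y. 0) has_derivative (\<lambda>h. 0)) (at x)" by simp
  then have "(f has_derivative (\<lambda>h. 0)) (at x)"
    by (rule has_derivative_transform_within_open[OF _ U x]) (simp add: z)
  with d have "f' = (\<lambda>h. 0)" using has_derivative_unique by blast
  then show ?thesis by simp
qed

lemma sumprod_deriv:
  fixes u w :: "'i \<Rightarrow> 'a::real_normed_vector \<Rightarrow> real"
  assumes "\<And>i. (u i has_derivative u' i) (at y)" "\<And>i. (w i has_derivative w' i) (at y)"
  shows "((\<lambda>y. \<Sum>i\<in>I. u i y * w i y) has_derivative (\<lambda>v. \<Sum>i\<in>I. u' i v * w i y + u i y * w' i v)) (at y)"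
  by (rule has_derivative_eq_rhs, rule has_derivative_sum, rule has_derivative_mult[OF assms(1,2)])
     (simp add: fun_eq_iff algebra_simps)

lemma lincomb_deriv:
  fixes c :: "'i::finite \<Rightarrow> real" and f :: "'a::real_normed_vector \<Rightarrow> real"
  assumes "(f has_derivative f') (at y)" "\<And>j. (u j has_derivative u' j) (at y)"
  shows "((\<lambda>y. f y + (\<Sum>j\<in>UNIV. c j * u j y)) has_derivative (\<lambda>v. f' v + (\<Sum>j\<in>UNIV. c j * u' j v))) (at y)"
  by (intro has_derivative_add assms has_derivative_sum has_derivative_mult_right)

lemma gw: "f differentiable (at y) \<Longrightarrow> (f has_derivative (\<lambda>v. grad f y \<bullet> v)) (at y)"
  by (rule grad_works)

lemma grad_axis: "grad f y \<bullet> axis k 1 = pd k f y"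
  by (simp add: cart_eq_inner_axis[symmetric])

lemma riccati_calc:
  fixes b :: "real^'n \<Rightarrow> real^'n" and A :: "real^'n \<Rightarrow> real^'n^'n"
    and D :: "real^'n^'n" and \<phi> :: "real^'n \<Rightarrow> real" and U :: "(real^'n) set"
  assumes b_smooth: "smooth_vec_on UNIV b"
    and A_jac: "\<And>x. (b has_derivative (\<lambda>h. A x *v h)) (at x)"
    and D_sym: "transpose D = D"
    and U_open: "open U" and \<phi>_smooth: "smooth_on U \<phi>"
    and HJ: "\<And>x. x \<in> U \<Longrightarrow> grad \<phi> x \<bullet> (b x + D *v grad \<phi> x) = 0"
    and x0: "x0 \<in> U" and crit: "grad \<phi> x0 = 0"
  shows "(\<chi> l k. \<Sum>i\<in>UNIV. b x0 $ i * pd i (pd k (pd l \<phi>)) x0)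
     = - (hess \<phi> x0 ** A x0) - transpose (A x0) ** hess \<phi> x0 - 2 *\<^sub>R (hess \<phi> x0 ** D ** hess \<phi> x0)"
proof -
  define g where "g i = pd i \<phi>" for i
  define bi where "bi i = (\<lambda>y. b y $ i)" for i
  have sg: "smooth_on U (g i)" for i unfolding g_def by (rule smooth_pd[OF \<phi>_smooth])
  have sgg: "smooth_on U (pd l (g i))" for i l by (rule smooth_pd[OF sg])
  have sb: "smooth_on UNIV (bi i)" for i using b_smooth by (simp add: smooth_vec_on_def bi_def)
  have sbb: "smooth_on UNIV (pd l (bi i))" for i l by (rule smooth_pd[OF sb])
  have dg: "y \<in> U \<Longrightarrow> g i differentiable (at y)" for i y using smooth_diff[OF sg] .
  have dgg: "y \<in> U \<Longrightarrow> pd l (g i) differentiable (at y)" for i l y using smooth_diff[OF sgg] .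
  have db: "bi i differentiable (at y)" for i y using smooth_diff[OF sb] by simp
  have dbb: "pd l (bi i) differentiable (at y)" for i l y using smooth_diff[OF sbb] by simp
  have Aent: "A y $ i $ j = pd j (bi i) y" for y i j
    using pd_of[OF vec_has_derivative_nth[OF A_jac[of y], of i], of j]
    by (simp add: bi_def mv_axis_nth)
  have g0: "g i x0 = 0" for i using crit by (simp add: g_def vec_eq_iff)
  define W where "W i y = bi i y + (\<Sum>j\<in>UNIV. D $ i $ j * g j y)" for i y
  define W2 where "W2 l i y = pd l (bi i) y + (\<Sum>j\<in>UNIV. D $ i $ j * pd l (g j) y)" for l i y
  have h0: "(\<Sum>i\<in>UNIV. g i y * W i y) = 0" if "y \<in> U" for y
    using HJ[OF that] by (simp add: inner_vec_def matrix_vector_mult_def g_def W_def bi_def)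
  have P0: "(\<Sum>i\<in>UNIV. pd l (g i) y * W i y) + (\<Sum>i\<in>UNIV. g i y * W2 l i y) = 0" if y: "y \<in> U" for l y
  proof -
    have Wd: "(W i has_derivative (\<lambda>v. grad (bi i) y \<bullet> v + (\<Sum>j\<in>UNIV. D $ i $ j * (grad (g j) y \<bullet> v)))) (at y)" for i
      unfolding W_def[abs_def] by (rule lincomb_deriv[OF gw[OF db] gw[OF dg[OF y]]])
    have "((\<lambda>y. \<Sum>i\<in>UNIV. g i y * W i y) has_derivative
        (\<lambda>v. \<Sum>i\<in>UNIV. (grad (g i) y \<bullet> v) * W i y + g i y * (grad (bi i) y \<bullet> v + (\<Sum>j\<in>UNIV. D $ i $ j * (grad (g j) y \<bullet> v))))) (at y)"
      by (rule sumprod_deriv[OF gw[OF dg[OF y]] Wd])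
    from zero_deriv[OF U_open y h0 this, of "axis l 1"]
    show ?thesis by (simp add: grad_axis W2_def sum.distrib)
  qed
  have id: "(\<Sum>i\<in>UNIV. pd k (pd l (g i)) x0 * bi i x0 + pd l (g i) x0 * W2 k i x0
      + pd k (g i) x0 * W2 l i x0) = 0" for l k
  proof -
    have Wd: "(W i has_derivative (\<lambda>v. grad (bi i) x0 \<bullet> v + (\<Sum>j\<in>UNIV. D $ i $ j * (grad (g j) x0 \<bullet> v)))) (at x0)" for i
      unfolding W_def[abs_def] by (rule lincomb_deriv[OF gw[OF db] gw[OF dg[OF x0]]])
    have W2d: "(W2 l i has_derivative (\<lambda>v. grad (pd l (bi i)) x0 \<bullet> v + (\<Sum>j\<in>UNIV. D $ i $ j * (grad (pd l (g j)) x0 \<bullet> v)))) (at x0)" for i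
      unfolding W2_def[abs_def] by (rule lincomb_deriv[OF gw[OF dbb] gw[OF dgg[OF x0]]])
    have "((\<lambda>y. (\<Sum>i\<in>UNIV. pd l (g i) y * W i y) + (\<Sum>i\<in>UNIV. g i y * W2 l i y)) has_derivative
       (\<lambda>v. (\<Sum>i\<in>UNIV. (grad (pd l (g i)) x0 \<bullet> v) * W i x0 + pd l (g i) x0 * (grad (bi i) x0 \<bullet> v + (\<Sum>j\<in>UNIV. D $ i $ j * (grad (g j) x0 \<bullet> v))))
         + (\<Sum>i\<in>UNIV. (grad (g i) x0 \<bullet> v) * W2 l i x0 + g i x0 * (grad (pd l (bi i)) x0 \<bullet> v + (\<Sum>j\<in>UNIV. D $ i $ j * (grad (pd l (g j)) x0 \<bullet> v)))))) (at x0)"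
      by (rule has_derivative_add[OF sumprod_deriv[OF gw[OF dgg[OF x0]] Wd] sumprod_deriv[OF gw[OF dg[OF x0]] W2d]])
    from zero_deriv[OF U_open x0 P0 this, of "axis k 1"]
    show ?thesis by (simp add: grad_axis W_def W2_def g0 sum.distrib)
  qed
  have sym2: "pd a (pd c \<phi>) y = pd c (pd a \<phi>) y" if "y \<in> U" for a c y
    using schwarz_smooth[OF U_open that \<phi>_smooth] by simp
  have hess_e: "hess \<phi> x0 $ i $ j = pd j (g i) x0" for i j
    using hess_nth[of \<phi> x0 i j] dg[OF x0] by (simp add: g_def)
  have third: "pd k (pd l (g i)) x0 = pd i (pd k (pd l \<phi>)) x0" for i l k
  proof -
    have "pd k (pd l (g i)) x0 = pd k (pd i (pd l \<phi>)) x0"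
      unfolding g_def by (rule pd_local[OF U_open x0]) (simp add: sym2)
    also have "\<dots> = pd i (pd k (pd l \<phi>)) x0"
      using schwarz_smooth[OF U_open x0 smooth_pd[OF \<phi>_smooth], of i k l] by simp
    finally show ?thesis .
  qed
  show ?thesis
  proof (rule ricc_alg[OF _ D_sym])
    show "hess \<phi> x0 $ i $ j = hess \<phi> x0 $ j $ i" for i j
      using sym2[OF x0] by (simp add: hess_e g_def)
    fix l k
    show "(\<chi> l k. \<Sum>i\<in>UNIV. b x0 $ i * pd i (pd k (pd l \<phi>)) x0) $ l $ k +
        (\<Sum>i\<in>UNIV. hess \<phi> x0 $ i $ l * (A x0 $ i $ k + (\<Sum>j\<in>UNIV. D $ i $ j * hess \<phi> x0 $ j $ k))
         + hess \<phi> x0 $ i $ k * (A x0 $ i $ l + (\<Sum>j\<in>UNIV. D $ i $ j * hess \<phi> x0 $ j $ l))) = 0"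
      using id[where l=l and k=k] by (simp add: hess_e Aent third W2_def bi_def sum.distrib mult.commute add_ac)
  qed
qed



lemma hess_chain:
  fixes \<phi> :: "real^'n \<Rightarrow> real" and xs :: "real \<Rightarrow> real^'n" and b :: "real^'n \<Rightarrow> real^'n"
  assumes \<phi>_smooth: "smooth_on U \<phi>" and inU: "\<And>s. xs s \<in> U"
    and xd: "(xs has_vector_derivative b (xs t)) (at t)"
  shows "((\<lambda>s. hess \<phi> (xs s)) has_vector_derivative
      (\<chi> l k. \<Sum>i\<in>UNIV. b (xs t) $ i * pd i (pd k (pd l \<phi>)) (xs t))) (at t)"
proof -
  define Hm where "Hm y = (\<chi> l. \<chi> k. pd k (pd l \<phi>) y)" for y
  have eq: "(\<lambda>s. hess \<phi> (xs s)) = (\<lambda>s. Hm (xs s))"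
  proof
    fix s
    have "\<And>i. pd i \<phi> differentiable (at (xs s))" using smooth_diff[OF smooth_pd[OF \<phi>_smooth] inU] .
    then show "hess \<phi> (xs s) = Hm (xs s)" by (simp add: vec_eq_iff Hm_def hess_nth)
  qed
  let ?x = "xs t"
  have dd: "\<And>l k. pd k (pd l \<phi>) differentiable (at ?x)"
    using smooth_diff[OF smooth_pd[OF smooth_pd[OF \<phi>_smooth]] inU] .
  have Hd: "(Hm has_derivative (\<lambda>h. \<chi> l. \<chi> k. grad (pd k (pd l \<phi>)) ?x \<bullet> h)) (at ?x)"
    unfolding Hm_def
    by (intro vec_has_derivative) (simp add: grad_works[OF dd])
  have xd': "(xs has_derivative (\<lambda>s. s *\<^sub>R b ?x)) (at t)" using xd by (simp add: has_vector_derivative_def)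
  have c: "((\<lambda>s. Hm (xs s)) has_derivative (\<lambda>s. \<chi> l. \<chi> k. grad (pd k (pd l \<phi>)) ?x \<bullet> (s *\<^sub>R b ?x))) (at t)"
    by (rule has_derivative_compose[OF xd' Hd])
  have "(\<lambda>s. \<chi> l. \<chi> k. grad (pd k (pd l \<phi>)) ?x \<bullet> (s *\<^sub>R b ?x))
      = (\<lambda>s. s *\<^sub>R (\<chi> l k. \<Sum>i\<in>UNIV. b ?x $ i * pd i (pd k (pd l \<phi>)) ?x))"
    by (simp add: fun_eq_iff vec_eq_iff inner_vec_def sum_distrib_left algebra_simps)
  with c show ?thesis unfolding eq has_vector_derivative_def by simp
qed



lemma onorm_inner: "onorm (\<lambda>h. (v::real^'n) \<bullet> h) \<le> norm v"
  by (rule onorm_le) (simp add: Cauchy_Schwarz_ineq2)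

lemma norm_sum_bound:
  fixes v :: "real^'n"
  assumes "\<And>i. \<bar>v $ i\<bar> \<le> M"
  shows "norm v \<le> real CARD('n) * M"
proof -
  have "norm v \<le> (\<Sum>i\<in>UNIV. \<bar>v $ i\<bar>)" by (rule norm_le_l1_cart)
  also have "\<dots> \<le> (\<Sum>i\<in>(UNIV::'n set). M)" using assms by (intro sum_mono) auto
  finally show ?thesis by simp
qed

lemma taylor2:
  fixes f :: "real^'n \<Rightarrow> real"
  assumes df: "\<And>z. z \<in> closed_segment y x \<Longrightarrow> f differentiable (at z)"
    and ddf: "\<And>z j. z \<in> closed_segment y x \<Longrightarrow> pd j f differentiable (at z)"
    and M: "\<And>z i j. z \<in> closed_segment y x \<Longrightarrow> \<bar>pd i (pd j f) z\<bar> \<le> M"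
  shows "\<bar>f x - f y - grad f y \<bullet> (x - y)\<bar> \<le> real CARD('n) * real CARD('n) * M * norm (x - y)^2"
proof -
  let ?S = "closed_segment y x"
  have yS: "y \<in> ?S" and xS: "x \<in> ?S" by auto
  have step1: "\<bar>pd j f z - pd j f y\<bar> \<le> (real CARD('n) * M) * norm (z - y)" if z: "z \<in> ?S" for z j
  proof -
    have "norm (pd j f z - pd j f y) \<le> (real CARD('n) * M) * norm (z - y)"
    proof (rule differentiable_bound[OF convex_closed_segment _ _ z yS])
      fix w assume w: "w \<in> ?S"
      show "(pd j f has_derivative (\<lambda>h. grad (pd j f) w \<bullet> h)) (at w within ?S)"
        using grad_works[OF ddf[OF w]] has_derivative_at_withinI by blast
      have "onorm (\<lambda>h. grad (pd j f) w \<bullet> h) \<le> norm (grad (pd j f) w)" by (rule onorm_inner)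
      also have "\<dots> \<le> real CARD('n) * M" by (rule norm_sum_bound) (simp add: M[OF w])
      finally show "onorm (\<lambda>h. grad (pd j f) w \<bullet> h) \<le> real CARD('n) * M" .
    qed
    then show ?thesis by simp
  qed
  have "norm (f x - f y - grad f y \<bullet> (x - y)) \<le> norm (x - y) * (real CARD('n) * (real CARD('n) * M * norm (x - y)))"
  proof (rule differentiable_bound_linearization[where S = ?S and f' = "\<lambda>z h. grad f z \<bullet> h"])
    show "\<And>t. t \<in> {0..1} \<Longrightarrow> y + t *\<^sub>R (x - y) \<in> ?S"
      by (auto simp: closed_segment_def algebra_simps intro!: exI[where x="_::real"])
    show "\<And>z. z \<in> ?S \<Longrightarrow> (f has_derivative (\<lambda>h. grad f z \<bullet> h)) (at z within ?S)"
      using grad_works[OF df] has_derivative_at_withinI by blast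
    show "y \<in> ?S" by (rule yS)
    fix z assume z: "z \<in> ?S"
    have "onorm ((\<lambda>h. grad f z \<bullet> h) - (\<lambda>h. grad f y \<bullet> h)) = onorm (\<lambda>h. (grad f z - grad f y) \<bullet> h)"
      by (simp add: fun_diff_def inner_diff_left)
    also have "\<dots> \<le> norm (grad f z - grad f y)" by (rule onorm_inner)
    also have "\<dots> \<le> real CARD('n) * (real CARD('n) * M * norm (x - y))"
    proof (rule norm_sum_bound)
      fix j
      have "\<bar>(grad f z - grad f y) $ j\<bar> \<le> (real CARD('n) * M) * norm (z - y)" using step1[OF z] by simp
      also have "\<dots> \<le> (real CARD('n) * M) * norm (x - y)"
      proof (rule mult_left_mono)
        show "norm (z - y) \<le> norm (x - y)" using segment_bound(1)[OF z] .
        have "\<bar>pd j (pd j f) y\<bar> \<le> M" using M[OF yS] .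
        then show "0 \<le> real CARD('n) * M" by simp
      qed
      finally show "\<bar>(grad f z - grad f y) $ j\<bar> \<le> real CARD('n) * M * norm (x - y)" .
    qed
    finally show "onorm ((\<lambda>h. grad f z \<bullet> h) - (\<lambda>h. grad f y \<bullet> h)) \<le> real CARD('n) * (real CARD('n) * M * norm (x - y))" .
  qed
  then show ?thesis by (simp add: power2_eq_square algebra_simps)
qed

lemma cont_bound:
  fixes f :: "'a::metric_space \<Rightarrow> real"
  assumes "compact K" "continuous_on K f"
  shows "\<exists>M. \<forall>z\<in>K. \<bar>f z\<bar> \<le> M"
proof -
  have "bounded (f ` K)" using compact_continuous_image[OF assms(2,1)] compact_imp_bounded by blast
  then show ?thesis unfolding bounded_iff by auto
qed

lemma finite_bound:
  fixes F :: "'i::finite \<Rightarrow> 'a \<Rightarrow> real"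
  assumes "\<And>i. \<exists>M. \<forall>z\<in>K. \<bar>F i z\<bar> \<le> M"
  shows "\<exists>M. \<forall>i. \<forall>z\<in>K. \<bar>F i z\<bar> \<le> M"
proof -
  obtain Mf where Mf: "\<And>i z. z \<in> K \<Longrightarrow> \<bar>F i z\<bar> \<le> Mf i" using assms by metis
  have "\<forall>i. \<forall>z\<in>K. \<bar>F i z\<bar> \<le> (\<Sum>j\<in>UNIV. \<bar>Mf j\<bar>)"
  proof (intro allI ballI)
    fix i z assume "z \<in> K"
    then have "\<bar>F i z\<bar> \<le> \<bar>Mf i\<bar>" using Mf[of z i] by linarith
    also have "\<dots> \<le> (\<Sum>j\<in>UNIV. \<bar>Mf j\<bar>)" by (rule member_le_sum) auto
    finally show "\<bar>F i z\<bar> \<le> (\<Sum>j\<in>UNIV. \<bar>Mf j\<bar>)" .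
  qed
  then show ?thesis by blast
qed



lemma pd_ln:
  fixes \<omega> :: "real^'n \<Rightarrow> real"
  assumes s: "smooth_on U \<omega>" and pos: "\<omega> y > 0" and y: "y \<in> U"
  shows "pd i (\<lambda>y. ln (\<omega> y)) y = pd i \<omega> y / \<omega> y"
proof -
  have "(\<omega> has_derivative (\<lambda>h. grad \<omega> y \<bullet> h)) (at y)" using grad_works smooth_diff s y by blast
  then have "((\<lambda>y. ln (\<omega> y)) has_derivative (\<lambda>h. (grad \<omega> y \<bullet> h) / \<omega> y)) (at y)" using pos
    by (auto intro!: derivative_eq_intros simp: field_simps)
  from pd_of[OF this, of i] show ?thesis by (simp add: cart_eq_inner_axis[symmetric])
qed

lemma grad_ln_pi:
  fixes \<phi> \<omega> :: "real^'n \<Rightarrow> real" and R :: "real^'n \<Rightarrow> real" and P :: "real^'n \<Rightarrow> real"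
  assumes U: "open U" and x: "x \<in> U" and ep: "\<epsilon> > 0"
    and \<phi>_smooth: "smooth_on U \<phi>" and \<omega>_smooth: "smooth_on U \<omega>" and \<omega>_pos: "\<And>x. x \<in> U \<Longrightarrow> \<omega> x > 0"
    and R_smooth: "smooth_on U R" and Ppos: "\<And>y. P y > 0"
    and WKB: "\<And>y. y \<in> U \<Longrightarrow> P y = a * exp (- \<phi> y / \<epsilon> + ln (\<omega> y) + R y)"
  shows "grad (\<lambda>y. ln (P y)) x = - (1/\<epsilon>) *\<^sub>R grad \<phi> x + grad (\<lambda>y. ln (\<omega> y)) x + grad R x"
proof -
  have a: "a > 0" using Ppos[of x] WKB[OF x] by (simp add: zero_less_mult_iff)
  have 1: "(\<phi> has_derivative (\<lambda>h. grad \<phi> x \<bullet> h)) (at x)" using grad_works smooth_diff \<phi>_smooth x by blast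
  have 2: "(R has_derivative (\<lambda>h. grad R x \<bullet> h)) (at x)" using grad_works smooth_diff R_smooth x by blast
  have 3: "((\<lambda>y. ln (\<omega> y)) has_derivative (\<lambda>h. grad (\<lambda>y. ln (\<omega> y)) x \<bullet> h)) (at x)"
    using ln_grad_has(1)[OF U \<omega>_smooth \<omega>_pos x] .
  have "((\<lambda>y. ln a + (- (1/\<epsilon>) * \<phi> y + ln (\<omega> y) + R y)) has_derivative
      (\<lambda>h. 0 + (- (1/\<epsilon>) * (grad \<phi> x \<bullet> h) + grad (\<lambda>y. ln (\<omega> y)) x \<bullet> h + grad R x \<bullet> h))) (at x)"
    by (intro has_derivative_add has_derivative_const has_derivative_mult_right 1 2 3)
  then have "((\<lambda>y. ln (P y)) has_derivative
      (\<lambda>h. 0 + (- (1/\<epsilon>) * (grad \<phi> x \<bullet> h) + grad (\<lambda>y. ln (\<omega> y)) x \<bullet> h + grad R x \<bullet> h))) (at x)"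
    by (rule has_derivative_transform_within_open[OF _ U x]) (use WKB a in \<open>simp add: ln_mult divide_inverse\<close>)
  then have "((\<lambda>y. ln (P y)) has_derivative
      (\<lambda>h. (- (1/\<epsilon>) *\<^sub>R grad \<phi> x + grad (\<lambda>y. ln (\<omega> y)) x + grad R x) \<bullet> h)) (at x)"
    by (rule has_derivative_eq_rhs) (simp add: fun_eq_iff inner_add_left inner_diff_left)
  then show ?thesis by (rule grad_from_has)
qed



lemma part1:
  fixes b :: "real^'n \<Rightarrow> real^'n" and A :: "real^'n \<Rightarrow> real^'n^'n"
    and D :: "real^'n^'n" and \<Gamma> :: "(real^'n) set"
    and \<pi> :: "real \<Rightarrow> real^'n \<Rightarrow> real" and ahat :: "real \<Rightarrow> real"
    and \<phi> \<omega> :: "real^'n \<Rightarrow> real" and R :: "real \<Rightarrow> real^'n \<Rightarrow> real"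
    and U :: "(real^'n) set"
  assumes b_smooth: "smooth_vec_on UNIV b"
    and A_jac: "\<And>x. (b has_derivative (\<lambda>h. A x *v h)) (at x)"
    and \<pi>_pos: "\<And>\<epsilon> x. \<epsilon> > 0 \<Longrightarrow> \<pi> \<epsilon> x > 0"
    and U_open: "open U" and \<Gamma>_U: "\<Gamma> \<subseteq> U" and \<Gamma>c: "compact \<Gamma>"
    and \<phi>_smooth: "smooth_on U \<phi>"
    and \<omega>_smooth: "smooth_on U \<omega>" and \<omega>_pos: "\<And>x. x \<in> U \<Longrightarrow> \<omega> x > 0"
    and R_smooth: "\<And>\<epsilon>. \<epsilon> > 0 \<Longrightarrow> smooth_on U (R \<epsilon>)"
    and WKB: "\<And>\<epsilon> x. \<epsilon> > 0 \<Longrightarrow> x \<in> U \<Longrightarrow>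
               \<pi> \<epsilon> x = ahat \<epsilon> * exp (- \<phi> x / \<epsilon> + ln (\<omega> x) + R \<epsilon> x)"
    and R_small: "\<exists>K \<epsilon>0. \<epsilon>0 > 0 \<and> (\<forall>\<epsilon> x. 0 < \<epsilon> \<and> \<epsilon> < \<epsilon>0 \<and> x \<in> U \<longrightarrow>
               \<bar>R \<epsilon> x\<bar> \<le> K * \<epsilon> \<and> norm (grad (R \<epsilon>) x) \<le> K * \<epsilon> \<and>
               norm (hess (R \<epsilon>) x) \<le> K * \<epsilon>)"
    and \<phi>_crit: "\<And>x. x \<in> \<Gamma> \<Longrightarrow> grad \<phi> x = 0"
  shows "\<forall>C>0. \<exists>K \<epsilon>0. \<epsilon>0 > 0 \<and> (\<forall>\<epsilon> xs x. 0 < \<epsilon> \<and> \<epsilon> < \<epsilon>0 \<and> xs \<in> \<Gamma> \<and>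
              norm (x - xs) \<le> C * sqrt \<epsilon> \<longrightarrow>
              norm (gammaf b D \<epsilon> (\<pi> \<epsilon>) x
                    - (b xs + (A xs + D ** hess \<phi> xs) *v (x - xs))) \<le> K * \<epsilon>)"
proof (intro allI impI)
  fix C :: real assume C: "C > 0"
  obtain KR eR where eR: "eR > 0" and KRb: "\<And>\<epsilon> x. 0 < \<epsilon> \<Longrightarrow> \<epsilon> < eR \<Longrightarrow> x \<in> U \<Longrightarrow>
        norm (grad (R \<epsilon>) x) \<le> KR * \<epsilon>"
    using R_small by blast
  obtain e where e: "e > 0" and eU: "(\<Union>x\<in>\<Gamma>. cball x e) \<subseteq> U"
    using compact_subset_open_imp_cball_epsilon_subset[OF \<Gamma>c U_open \<Gamma>_U] by blast
  define \<delta> where "\<delta> = e / 2"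
  have \<delta>: "\<delta> > 0" using e by (simp add: \<delta>_def)
  define Kc where "Kc = (\<lambda>p. fst p + snd p) ` (\<Gamma> \<times> cball (0::real^'n) \<delta>)"
  have Kcc: "compact Kc" unfolding Kc_def
    by (intro compact_continuous_image compact_Times \<Gamma>c compact_cball continuous_on_add
        continuous_on_fst continuous_on_snd continuous_on_id)
  have KcU: "Kc \<subseteq> U"
  proof
    fix z assume "z \<in> Kc"
    then obtain a v where a: "a \<in> \<Gamma>" and v: "norm v \<le> \<delta>" and z: "z = a + v" by (auto simp: Kc_def)
    then have "z \<in> cball a e" using e by (simp add: dist_norm \<delta>_def)
    then show "z \<in> U" using eU a by blast
  qed
  have segK: "closed_segment xs x \<subseteq> Kc" if xs: "xs \<in> \<Gamma>" and xd: "norm (x - xs) \<le> \<delta>" for xs x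
  proof
    fix z assume z: "z \<in> closed_segment xs x"
    have "norm (z - xs) \<le> norm (x - xs)" using segment_bound(1)[OF z] .
    then have "(xs, z - xs) \<in> \<Gamma> \<times> cball 0 \<delta>" using xs xd by simp
    then show "z \<in> Kc" unfolding Kc_def by (rule image_eqI[rotated]) simp
  qed
  define bi where "bi i = (\<lambda>y. b y $ i)" for i
  define g where "g i = pd i \<phi>" for i
  define L where "L = (\<lambda>y. ln (\<omega> y))"
  have sb: "smooth_on UNIV (bi i)" for i using b_smooth by (simp add: smooth_vec_on_def bi_def)
  have sg: "smooth_on U (g i)" for i unfolding g_def by (rule smooth_pd[OF \<phi>_smooth])
  obtain Mb where Mb: "\<And>t z. z \<in> Kc \<Longrightarrow> \<bar>(\<lambda>(i,a,c) z. pd a (pd c (bi i)) z) t z\<bar> \<le> Mb"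
  proof -
    have "\<exists>M. \<forall>t. \<forall>z\<in>Kc. \<bar>(\<lambda>(i,a,c) z. pd a (pd c (bi i)) z) t z\<bar> \<le> M"
    proof (rule finite_bound)
      fix t :: "'n \<times> 'n \<times> 'n"
      obtain i a c where t: "t = (i, a, c)" by (cases t) auto
      have "continuous_on Kc (pd a (pd c (bi i)))"
        using smooth_cont[OF smooth_pd[OF smooth_pd[OF sb]]] continuous_on_subset by blast
      then show "\<exists>M. \<forall>z\<in>Kc. \<bar>(\<lambda>(i,a,c) z. pd a (pd c (bi i)) z) t z\<bar> \<le> M"
        using cont_bound[OF Kcc] t by simp
    qed
    then show ?thesis using that by blast
  qed
  obtain Mp where Mp: "\<And>t z. z \<in> Kc \<Longrightarrow> \<bar>(\<lambda>(i,a,c) z. pd a (pd c (g i)) z) t z\<bar> \<le> Mp"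
  proof -
    have "\<exists>M. \<forall>t. \<forall>z\<in>Kc. \<bar>(\<lambda>(i,a,c) z. pd a (pd c (g i)) z) t z\<bar> \<le> M"
    proof (rule finite_bound)
      fix t :: "'n \<times> 'n \<times> 'n"
      obtain i a c where t: "t = (i, a, c)" by (cases t) auto
      have "continuous_on Kc (pd a (pd c (g i)))"
        using smooth_cont[OF smooth_pd[OF smooth_pd[OF sg]]] continuous_on_subset KcU by blast
      then show "\<exists>M. \<forall>z\<in>Kc. \<bar>(\<lambda>(i,a,c) z. pd a (pd c (g i)) z) t z\<bar> \<le> M"
        using cont_bound[OF Kcc] t by simp
    qed
    then show ?thesis using that by blast
  qed
  obtain Mlb where Mlb: "\<And>i z. z \<in> Kc \<Longrightarrow> \<bar>pd i L z\<bar> \<le> Mlb"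
  proof -
    have "\<exists>M. \<forall>i. \<forall>z\<in>Kc. \<bar>pd i L z\<bar> \<le> M"
    proof (rule finite_bound)
      fix i
      have "continuous_on Kc (\<lambda>z. pd i \<omega> z / \<omega> z)"
      proof (rule continuous_on_divide)
        show "continuous_on Kc (pd i \<omega>)"
          using smooth_cont[OF smooth_pd[OF \<omega>_smooth]] continuous_on_subset KcU by blast
        show "continuous_on Kc \<omega>" using smooth_cont[OF \<omega>_smooth] continuous_on_subset KcU by blast
        show "\<forall>z\<in>Kc. \<omega> z \<noteq> 0" using \<omega>_pos KcU by force
      qed
      then obtain M where M: "\<forall>z\<in>Kc. \<bar>pd i \<omega> z / \<omega> z\<bar> \<le> M" using cont_bound[OF Kcc] by blast
      have "\<forall>z\<in>Kc. \<bar>pd i L z\<bar> \<le> M"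
        using M pd_ln[OF \<omega>_smooth \<omega>_pos] KcU unfolding L_def by (metis subsetD)
      then show "\<exists>M. \<forall>z\<in>Kc. \<bar>pd i L z\<bar> \<le> M" by blast
    qed
    then show ?thesis using that by blast
  qed
  define n where "n = real CARD('n)"
  define Mb' where "Mb' = \<bar>Mb\<bar>"
  define Mp' where "Mp' = \<bar>Mp\<bar>"
  define K where "K = n * (n * n * Mb' * C^2) + mnorm D * (n * (n * n * Mp' * C^2)) + mnorm D * (n * \<bar>Mlb\<bar> + \<bar>KR\<bar>)"
  define e0 where "e0 = min (min eR 1) ((\<delta> / (C + 1))^2)"
  show "\<exists>K e0. e0 > 0 \<and> (\<forall>\<epsilon> xs x. 0 < \<epsilon> \<and> \<epsilon> < e0 \<and> xs \<in> \<Gamma> \<and>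
              norm (x - xs) \<le> C * sqrt \<epsilon> \<longrightarrow>
              norm (gammaf b D \<epsilon> (\<pi> \<epsilon>) x
                    - (b xs + (A xs + D ** hess \<phi> xs) *v (x - xs))) \<le> K * \<epsilon>)"
  proof (intro exI conjI allI impI)
    show "e0 > 0" using eR \<delta> C by (simp add: e0_def)
    fix \<epsilon> xs x
    assume H: "0 < \<epsilon> \<and> \<epsilon> < e0 \<and> xs \<in> \<Gamma> \<and> norm (x - xs) \<le> C * sqrt \<epsilon>"
    then have ep: "0 < \<epsilon>" "\<epsilon> < eR" "\<epsilon> < 1" "\<epsilon> < (\<delta> / (C + 1))^2" and xs: "xs \<in> \<Gamma>"
      and xd: "norm (x - xs) \<le> C * sqrt \<epsilon>" by (auto simp: e0_def)
    have "sqrt \<epsilon> < \<delta> / (C + 1)"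
      using real_sqrt_less_mono[OF ep(4)] \<delta> C by simp
    then have "(C + 1) * sqrt \<epsilon> < \<delta>" using C by (simp add: field_simps)
    moreover have "C * sqrt \<epsilon> \<le> (C + 1) * sqrt \<epsilon>" using ep by (intro mult_right_mono) auto
    ultimately have xd\<delta>: "norm (x - xs) \<le> \<delta>" using xd by linarith
    have xd2: "norm (x - xs)^2 \<le> C^2 * \<epsilon>"
    proof -
      have "norm (x - xs)^2 \<le> (C * sqrt \<epsilon>)^2" using xd by (intro power_mono) auto
      also have "\<dots> = C^2 * \<epsilon>" using ep by (simp add: power_mult_distrib)
      finally show ?thesis .
    qed
    have seg: "closed_segment xs x \<subseteq> Kc" by (rule segK[OF xs xd\<delta>])
    have segU: "closed_segment xs x \<subseteq> U" using seg KcU by blast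
    have xU: "x \<in> U" using segU by auto
    have xsU: "xs \<in> U" using \<Gamma>_U xs by auto
    have Eb: "norm (b x - b xs - A xs *v (x - xs)) \<le> n * (n * n * Mb' * norm (x - xs)^2)"
      unfolding n_def
    proof (rule norm_sum_bound)
      fix i
      have Ai: "(\<lambda>h. (A xs *v h) $ i) = (\<lambda>h. grad (bi i) xs \<bullet> h)"
        using has_derivative_grad[OF vec_has_derivative_nth[OF A_jac[of xs], of i]] by (simp add: bi_def)
      have "\<bar>bi i x - bi i xs - grad (bi i) xs \<bullet> (x - xs)\<bar> \<le> real CARD('n) * real CARD('n) * Mb' * norm (x - xs)^2"
      proof (rule taylor2)
        show "\<And>z. z \<in> closed_segment xs x \<Longrightarrow> bi i differentiable (at z)" using smooth_diff[OF sb] by simp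
        show "\<And>z j. z \<in> closed_segment xs x \<Longrightarrow> pd j (bi i) differentiable (at z)"
          using smooth_diff[OF smooth_pd[OF sb]] by simp
        fix z a c assume "z \<in> closed_segment xs x"
        then have "z \<in> Kc" using seg by blast
        from Mb[OF this, of "(i, a, c)"] show "\<bar>pd a (pd c (bi i)) z\<bar> \<le> Mb'" by (simp add: Mb'_def)
      qed
      moreover have "(b x - b xs - A xs *v (x - xs)) $ i = bi i x - bi i xs - grad (bi i) xs \<bullet> (x - xs)"
        using fun_cong[OF Ai, of "x - xs"] by (simp add: bi_def)
      ultimately show "\<bar>(b x - b xs - A xs *v (x - xs)) $ i\<bar> \<le> real CARD('n) * real CARD('n) * Mb' * norm (x - xs)^2"
        by simp
    qed
    have Ep: "norm (grad \<phi> x - hess \<phi> xs *v (x - xs)) \<le> n * (n * n * Mp' * norm (x - xs)^2)"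
      unfolding n_def
    proof (rule norm_sum_bound)
      fix i
      have "\<bar>g i x - g i xs - grad (g i) xs \<bullet> (x - xs)\<bar> \<le> real CARD('n) * real CARD('n) * Mp' * norm (x - xs)^2"
      proof (rule taylor2)
        show "\<And>z. z \<in> closed_segment xs x \<Longrightarrow> g i differentiable (at z)" using smooth_diff[OF sg] segU by blast
        show "\<And>z j. z \<in> closed_segment xs x \<Longrightarrow> pd j (g i) differentiable (at z)"
          using smooth_diff[OF smooth_pd[OF sg]] segU by blast
        fix z a c assume "z \<in> closed_segment xs x"
        then have "z \<in> Kc" using seg by blast
        from Mp[OF this, of "(i, a, c)"] show "\<bar>pd a (pd c (g i)) z\<bar> \<le> Mp'" by (simp add: Mp'_def)
      qed
      moreover have "g i xs = 0" using \<phi>_crit[OF xs] by (simp add: g_def vec_eq_iff)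
      moreover have "(hess \<phi> xs *v (x - xs)) $ i = grad (g i) xs \<bullet> (x - xs)"
      proof -
        have "\<And>j. pd j \<phi> differentiable (at xs)" using smooth_diff[OF smooth_pd[OF \<phi>_smooth] xsU] .
        then show ?thesis by (simp add: matrix_vector_mult_def inner_vec_def hess_nth g_def mult.commute)
      qed
      ultimately show "\<bar>(grad \<phi> x - hess \<phi> xs *v (x - xs)) $ i\<bar> \<le> real CARD('n) * real CARD('n) * Mp' * norm (x - xs)^2"
        by (simp add: g_def)
    qed
    have El: "norm (grad L x) \<le> n * \<bar>Mlb\<bar>"
      unfolding n_def
    proof (rule norm_sum_bound)
      fix i
      have "x \<in> Kc" using seg by auto
      then have "\<bar>pd i L x\<bar> \<le> Mlb" by (rule Mlb)
      then show "\<bar>grad L x $ i\<bar> \<le> \<bar>Mlb\<bar>" by simp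
    qed
    have ER: "norm (grad (R \<epsilon>) x) \<le> \<bar>KR\<bar>"
    proof -
      have "norm (grad (R \<epsilon>) x) \<le> KR * \<epsilon>" using KRb ep xU by blast
      also have "\<dots> \<le> \<bar>KR\<bar> * \<epsilon>" using ep by (intro mult_right_mono) auto
      also have "\<dots> \<le> \<bar>KR\<bar>" using ep by (intro mult_left_le) auto
      finally show ?thesis .
    qed
    have gl: "grad (\<lambda>y. ln (\<pi> \<epsilon> y)) x = - (1/\<epsilon>) *\<^sub>R grad \<phi> x + grad L x + grad (R \<epsilon>) x"
      unfolding L_def
      by (rule grad_ln_pi[OF U_open xU ep(1) \<phi>_smooth \<omega>_smooth \<omega>_pos R_smooth[OF ep(1)] \<pi>_pos[OF ep(1)] WKB[OF ep(1)]])
    have decomp: "gammaf b D \<epsilon> (\<pi> \<epsilon>) x - (b xs + (A xs + D ** hess \<phi> xs) *v (x - xs))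
       = (b x - b xs - A xs *v (x - xs)) + D *v (grad \<phi> x - hess \<phi> xs *v (x - xs))
         - \<epsilon> *\<^sub>R (D *v (grad L x + grad (R \<epsilon>) x))"
    proof -
      have 1: "D *v (- (1/\<epsilon>) *\<^sub>R grad \<phi> x + grad L x + grad (R \<epsilon>) x)
          = (- (1/\<epsilon>)) *\<^sub>R (D *v grad \<phi> x) + D *v (grad L x + grad (R \<epsilon>) x)"
        by (simp only: matrix_vector_right_distrib matrix_vector_mult_scaleR add.assoc)
      have 2: "\<epsilon> *\<^sub>R ((- (1/\<epsilon>)) *\<^sub>R (D *v grad \<phi> x)) = - (D *v grad \<phi> x)" using ep(1) by simp
      have 3: "(A xs + D ** hess \<phi> xs) *v (x - xs) = A xs *v (x - xs) + D *v (hess \<phi> xs *v (x - xs))"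
        by (simp only: matrix_vector_mult_add_rdistrib matrix_vector_mul_assoc)
      have 4: "D *v (grad \<phi> x - hess \<phi> xs *v (x - xs)) = D *v grad \<phi> x - D *v (hess \<phi> xs *v (x - xs))"
        by (rule matrix_vector_mult_diff_distrib)
      show ?thesis
        unfolding gammaf_def gl 1 3 4 scaleR_right_distrib 2 by (simp add: algebra_simps)
    qed
    have mD: "mnorm D \<ge> 0" by (rule mnorm_nonneg)
    have n0: "n \<ge> 0" by (simp add: n_def)
    have Mb0: "Mb' \<ge> 0" "Mp' \<ge> 0" by (auto simp: Mb'_def Mp'_def)
    have t1: "n * (n * n * Mb' * norm (x - xs)^2) \<le> n * (n * n * Mb' * C^2) * \<epsilon>"
    proof -
      have c: "0 \<le> n * (n * n * Mb')" using n0 Mb0 by simp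
      have "(n * (n * n * Mb')) * norm (x - xs)^2 \<le> (n * (n * n * Mb')) * (C^2 * \<epsilon>)"
        by (rule mult_left_mono[OF xd2 c])
      then show ?thesis by (simp add: mult.assoc mult.left_commute)
    qed
    have t2: "norm (D *v (grad \<phi> x - hess \<phi> xs *v (x - xs))) \<le> mnorm D * (n * (n * n * Mp' * C^2)) * \<epsilon>"
    proof -
      have "norm (D *v (grad \<phi> x - hess \<phi> xs *v (x - xs))) \<le> mnorm D * norm (grad \<phi> x - hess \<phi> xs *v (x - xs))"
        by (rule mnorm_mv)
      also have "\<dots> \<le> mnorm D * (n * (n * n * Mp' * norm (x - xs)^2))" using Ep mD by (rule mult_left_mono)
      also have "\<dots> \<le> mnorm D * (n * (n * n * Mp' * C^2) * \<epsilon>)"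
      proof (rule mult_left_mono[OF _ mD])
        have c: "0 \<le> n * (n * n * Mp')" using n0 Mb0 by simp
        have "(n * (n * n * Mp')) * norm (x - xs)^2 \<le> (n * (n * n * Mp')) * (C^2 * \<epsilon>)"
          by (rule mult_left_mono[OF xd2 c])
        then show "n * (n * n * Mp' * norm (x - xs)^2) \<le> n * (n * n * Mp' * C^2) * \<epsilon>"
          by (simp add: mult.assoc mult.left_commute)
      qed
      finally show ?thesis by (simp add: mult.assoc)
    qed
    have t3: "norm (\<epsilon> *\<^sub>R (D *v (grad L x + grad (R \<epsilon>) x))) \<le> mnorm D * (n * \<bar>Mlb\<bar> + \<bar>KR\<bar>) * \<epsilon>"
    proof -
      have "norm (D *v (grad L x + grad (R \<epsilon>) x)) \<le> mnorm D * norm (grad L x + grad (R \<epsilon>) x)" by (rule mnorm_mv)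
      also have "\<dots> \<le> mnorm D * (n * \<bar>Mlb\<bar> + \<bar>KR\<bar>)"
        using norm_triangle_ineq[of "grad L x" "grad (R \<epsilon>) x"] El ER mD by (intro mult_left_mono) auto
      finally have "norm (D *v (grad L x + grad (R \<epsilon>) x)) \<le> mnorm D * (n * \<bar>Mlb\<bar> + \<bar>KR\<bar>)" .
      then have "\<bar>\<epsilon>\<bar> * norm (D *v (grad L x + grad (R \<epsilon>) x)) \<le> \<epsilon> * (mnorm D * (n * \<bar>Mlb\<bar> + \<bar>KR\<bar>))"
        using ep by (simp add: mult_left_mono)
      then show ?thesis by (simp add: mult.commute)
    qed
    have "norm (gammaf b D \<epsilon> (\<pi> \<epsilon>) x - (b xs + (A xs + D ** hess \<phi> xs) *v (x - xs)))
       \<le> norm (b x - b xs - A xs *v (x - xs)) + norm (D *v (grad \<phi> x - hess \<phi> xs *v (x - xs)))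
         + norm (\<epsilon> *\<^sub>R (D *v (grad L x + grad (R \<epsilon>) x)))"
      unfolding decomp using norm_triangle_ineq4[of "(b x - b xs - A xs *v (x - xs)) + D *v (grad \<phi> x - hess \<phi> xs *v (x - xs))"
         "\<epsilon> *\<^sub>R (D *v (grad L x + grad (R \<epsilon>) x))"]
        norm_triangle_ineq[of "b x - b xs - A xs *v (x - xs)" "D *v (grad \<phi> x - hess \<phi> xs *v (x - xs))"]
      by linarith
    also have "\<dots> \<le> K * \<epsilon>"
    proof -
      have "K * \<epsilon> = n * (n * n * Mb' * C^2) * \<epsilon> + mnorm D * (n * (n * n * Mp' * C^2)) * \<epsilon>
          + mnorm D * (n * \<bar>Mlb\<bar> + \<bar>KR\<bar>) * \<epsilon>" by (simp add: K_def distrib_right)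
      then show ?thesis using Eb t1 t2 t3 by linarith
    qed
    finally show "norm (gammaf b D \<epsilon> (\<pi> \<epsilon>) x - (b xs + (A xs + D ** hess \<phi> xs) *v (x - xs))) \<le> K * \<epsilon>" .
  qed
qed


theorem theorem2:
  fixes b :: "real^'n \<Rightarrow> real^'n" and A :: "real^'n \<Rightarrow> real^'n^'n"
    and D :: "real^'n^'n" and \<Gamma> :: "(real^'n) set"
    and \<pi> :: "real \<Rightarrow> real^'n \<Rightarrow> real" and ahat :: "real \<Rightarrow> real"
    and \<phi> \<omega> :: "real^'n \<Rightarrow> real" and R :: "real \<Rightarrow> real^'n \<Rightarrow> real"
    and U :: "(real^'n) set"
  assumes b_smooth: "smooth_vec_on UNIV b"
    and A_jac: "\<And>x. (b has_derivative (\<lambda>h. A x *v h)) (at x)"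
    and D_sym: "transpose D = D"
    and D_pos: "\<And>v. v \<noteq> 0 \<Longrightarrow> v \<bullet> (D *v v) > 0"
    and cycle: "stable_limit_cycle b \<Gamma>"
    and \<pi>_pos: "\<And>\<epsilon> x. \<epsilon> > 0 \<Longrightarrow> \<pi> \<epsilon> x > 0"
    and \<pi>_C2: "\<And>\<epsilon>. \<epsilon> > 0 \<Longrightarrow> Ck_on 2 UNIV (\<pi> \<epsilon>)"
    and \<pi>_density: "\<And>\<epsilon>. \<epsilon> > 0 \<Longrightarrow> (\<pi> \<epsilon> has_integral 1) UNIV"
    and stationary: "\<And>\<epsilon> x. \<epsilon> > 0 \<Longrightarrow> divg (flux b D \<epsilon> (\<pi> \<epsilon>)) x = 0"
    and U_open: "open U" and \<Gamma>_U: "\<Gamma> \<subseteq> U"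
    and \<phi>_smooth: "smooth_on U \<phi>"
    and \<omega>_smooth: "smooth_on U \<omega>" and \<omega>_pos: "\<And>x. x \<in> U \<Longrightarrow> \<omega> x > 0"
    and R_smooth: "\<And>\<epsilon>. \<epsilon> > 0 \<Longrightarrow> smooth_on U (R \<epsilon>)"
    and WKB: "\<And>\<epsilon> x. \<epsilon> > 0 \<Longrightarrow> x \<in> U \<Longrightarrow>
               \<pi> \<epsilon> x = ahat \<epsilon> * exp (- \<phi> x / \<epsilon> + ln (\<omega> x) + R \<epsilon> x)"
    and R_small: "\<exists>K \<epsilon>0. \<epsilon>0 > 0 \<and> (\<forall>\<epsilon> x. 0 < \<epsilon> \<and> \<epsilon> < \<epsilon>0 \<and> x \<in> U \<longrightarrow>
               \<bar>R \<epsilon> x\<bar> \<le> K * \<epsilon> \<and> norm (grad (R \<epsilon>) x) \<le> K * \<epsilon> \<and>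
               norm (hess (R \<epsilon>) x) \<le> K * \<epsilon>)"
    and \<phi>_zero: "\<And>x. x \<in> \<Gamma> \<Longrightarrow> \<phi> x = 0"
    and \<phi>_crit: "\<And>x. x \<in> \<Gamma> \<Longrightarrow> grad \<phi> x = 0"
  shows "(\<forall>C>0. \<exists>K \<epsilon>0. \<epsilon>0 > 0 \<and> (\<forall>\<epsilon> xs x. 0 < \<epsilon> \<and> \<epsilon> < \<epsilon>0 \<and> xs \<in> \<Gamma> \<and>
              norm (x - xs) \<le> C * sqrt \<epsilon> \<longrightarrow>
              norm (gammaf b D \<epsilon> (\<pi> \<epsilon>) x
                    - (b xs + (A xs + D ** hess \<phi> xs) *v (x - xs))) \<le> K * \<epsilon>))
     \<and> (\<forall>xs :: real \<Rightarrow> real^'n. (\<forall>t. xs t \<in> \<Gamma>) \<and>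
              (\<forall>t. (xs has_vector_derivative b (xs t)) (at t)) \<longrightarrow>
          (\<forall>t. ((\<lambda>s. hess \<phi> (xs s)) has_vector_derivative
                 (- (hess \<phi> (xs t) ** A (xs t)) - transpose (A (xs t)) ** hess \<phi> (xs t)
                  - 2 *\<^sub>R (hess \<phi> (xs t) ** D ** hess \<phi> (xs t)))) (at t)))"
  proof
  obtain p T where pT: "T > 0" "\<forall>t. (p has_vector_derivative b (p t)) (at t)" "\<Gamma> = p ` {0..T}"
    using cycle unfolding stable_limit_cycle_def by blast
  have "continuous_on {0..T} p"
    by (rule continuous_on_vector_derivative) (use pT(2) has_vector_derivative_at_within in blast)
  then have \<Gamma>c: "compact \<Gamma>" using pT(3) compact_continuous_image compact_Icc by blast
  show "\<forall>C>0. \<exists>K \<epsilon>0. \<epsilon>0 > 0 \<and> (\<forall>\<epsilon> xs x. 0 < \<epsilon> \<and> \<epsilon> < \<epsilon>0 \<and> xs \<in> \<Gamma> \<and>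
              norm (x - xs) \<le> C * sqrt \<epsilon> \<longrightarrow>
              norm (gammaf b D \<epsilon> (\<pi> \<epsilon>) x
                    - (b xs + (A xs + D ** hess \<phi> xs) *v (x - xs))) \<le> K * \<epsilon>)"
    by (rule part1[OF b_smooth A_jac \<pi>_pos U_open \<Gamma>_U \<Gamma>c \<phi>_smooth \<omega>_smooth \<omega>_pos R_smooth WKB R_small \<phi>_crit])
  have HJ: "\<And>x. x \<in> U \<Longrightarrow> grad \<phi> x \<bullet> (b x + D *v grad \<phi> x) = 0"
    by (rule HJ_U[OF A_jac \<pi>_pos stationary U_open \<phi>_smooth \<omega>_smooth \<omega>_pos R_smooth WKB R_small])
  show "\<forall>xs :: real \<Rightarrow> real^'n. (\<forall>t. xs t \<in> \<Gamma>) \<and>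
              (\<forall>t. (xs has_vector_derivative b (xs t)) (at t)) \<longrightarrow>
          (\<forall>t. ((\<lambda>s. hess \<phi> (xs s)) has_vector_derivative
                 (- (hess \<phi> (xs t) ** A (xs t)) - transpose (A (xs t)) ** hess \<phi> (xs t)
                  - 2 *\<^sub>R (hess \<phi> (xs t) ** D ** hess \<phi> (xs t)))) (at t))"
  proof (intro allI impI)
    fix xs :: "real \<Rightarrow> real^'n" and t :: real
    assume H: "(\<forall>t. xs t \<in> \<Gamma>) \<and> (\<forall>t. (xs has_vector_derivative b (xs t)) (at t))"
    then have inU: "\<And>s. xs s \<in> U" using \<Gamma>_U by blast
    have "((\<lambda>s. hess \<phi> (xs s)) has_vector_derivative
      (\<chi> l k. \<Sum>i\<in>UNIV. b (xs t) $ i * pd i (pd k (pd l \<phi>)) (xs t))) (at t)"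
    proof -
      have "(xs has_vector_derivative b (xs t)) (at t)" using H by blast
      then show ?thesis by (rule hess_chain[where xs=xs and U=U, OF \<phi>_smooth inU])
    qed
    moreover have "(\<chi> l k. \<Sum>i\<in>UNIV. b (xs t) $ i * pd i (pd k (pd l \<phi>)) (xs t))
       = - (hess \<phi> (xs t) ** A (xs t)) - transpose (A (xs t)) ** hess \<phi> (xs t)
                  - 2 *\<^sub>R (hess \<phi> (xs t) ** D ** hess \<phi> (xs t))"
      using riccati_calc[OF b_smooth A_jac D_sym U_open \<phi>_smooth HJ inU[of t] \<phi>_crit] H by blast
    ultimately show "((\<lambda>s. hess \<phi> (xs s)) has_vector_derivative
                 (- (hess \<phi> (xs t) ** A (xs t)) - transpose (A (xs t)) ** hess \<phi> (xs t)
                  - 2 *\<^sub>R (hess \<phi> (xs t) ** D ** hess \<phi> (xs t)))) (at t)" by simp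
  qed
qed

end
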